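(* For every cylindric partition $\alpha$ on $\mathcal C_{k,n}$ and variable set $\mathbf x$, \[ \sum_{\substack{\mu\in\operatorname{Cylpar};\\ \mu\subseteq\alpha}} s_{\alpha/\mu}(\mathbf x)=\sum_{\substack{\lambda\in\operatorname{Cylpar};\\ \alpha\subseteq\lambda}} s_{\lambda/\alpha}(\mathbf x). \]
   Context: Fix integers $n>k\ge1$. A cylindric partition is a weakly decreasing integer sequence $(\lambda_m)_{m\in\mathbb Z}$ with $\lambda_m=\lambda_{m+k}+n-k$; $\operatorname{Cylpar}$ is the set of them. A point $(x,y)\in\mathbb Z^2$ lies in $\lambda$ if $y\le\lambda_x$. Boxes are classes of points modulo translation by multiples of $(-k,n-k)$; $\pi$ the projection; a box lies in $\lambda$ iff its representatives do. $\mu\subseteq\lambda$ means $\mu_m\le\lambda_m$ for all $m$; boxes of $\lambda/\mu$ are the finitely many boxes in $\lambda$ not in $\mu$. For a totally ordered alphabet $A$, a semistandard cylindric tableau of shape $\lambda/\mu$ is a map $R$ from the boxes of $\lambda/\mu$ to $A$ with $R(\pi(x,y_1))\le R(\pi(x,y_2))$ whenever $(x,y_1),(x,y_2)$ lie in $\lambda$ but not $\mu$ and $y_1<y_2$, and $R(\pi(x_1,y))<R(\pi(x_2,y))$ whenever $(x_1,y),(x_2,y)$ lie in $\lambda$ but not $\mu$ and $x_1<x_2$. For indeterminates $\mathbf x=(x_a)_{a\in A}$, $s_{\lambda/\mu}(\mathbf x)=\sum_R\prod_B x_{R(B)}$, the sum over all such tableaux $R$ of shape $\lambda/\mu$ and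 the product over the boxes $B$ of $\lambda/\mu$. The identity is one of formal power series. *)

theory Defs
  imports Main "HOL-Library.Multiset" "HOL-Library.FuncSet"
begin

definition cylpar :: "nat \<Rightarrow> nat \<Rightarrow> (int \<Rightarrow> int) \<Rightarrow> bool" where
  "cylpar k n lam \<longleftrightarrow> (\<forall>m. lam (m + 1) \<le> lam m) \<and>
                         (\<forall>m. lam m = lam (m + int k) + (int n - int k))"

definition in_part :: "(int \<Rightarrow> int) \<Rightarrow> int \<times> int \<Rightarrow> bool" where
  "in_part lam p \<longleftrightarrow> snd p \<le> lam (fst p)"

definition subpart :: "(int \<Rightarrow> int) \<Rightarrow> (int \<Rightarrow> int) \<Rightarrow> bool" where
  "subpart mu lam \<longleftrightarrow> (\<forall>m. mu m \<le> lam m)"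

text \<open>Boxes: classes of points modulo translation by multiples of (-k, n-k); pi is the projection.\<close>
definition box :: "nat \<Rightarrow> nat \<Rightarrow> int \<times> int \<Rightarrow> (int \<times> int) set" where
  "box k n p = {(fst p - j * int k, snd p + j * (int n - int k)) | j. True}"

definition skew_points :: "(int \<Rightarrow> int) \<Rightarrow> (int \<Rightarrow> int) \<Rightarrow> (int \<times> int) set" where
  "skew_points lam mu = {p. in_part lam p \<and> \<not> in_part mu p}"

definition skew_boxes :: "nat \<Rightarrow> nat \<Rightarrow> (int \<Rightarrow> int) \<Rightarrow> (int \<Rightarrow> int) \<Rightarrow> (int \<times> int) set set" where
  "skew_boxes k n lam mu = box k n ` skew_points lam mu"

definition ssct :: "nat \<Rightarrow> nat \<Rightarrow> (int \<Rightarrow> int) \<Rightarrow> (int \<Rightarrow> int) \<Rightarrow> ((int \<times> int) set \<Rightarrow> 'a::linorder) \<Rightarrow> bool" where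
  "ssct k n lam mu R \<longleftrightarrow>
     R \<in> extensional (skew_boxes k n lam mu) \<and>
     (\<forall>x y1 y2. (x, y1) \<in> skew_points lam mu \<and> (x, y2) \<in> skew_points lam mu \<and> y1 < y2
        \<longrightarrow> R (box k n (x, y1)) \<le> R (box k n (x, y2))) \<and>
     (\<forall>x1 x2 y. (x1, y) \<in> skew_points lam mu \<and> (x2, y) \<in> skew_points lam mu \<and> x1 < x2
        \<longrightarrow> R (box k n (x1, y)) < R (box k n (x2, y)))"

text \<open>The monomial prod_B x_{R(B)}, represented as the multiset of entries.\<close>
definition tab_content :: "nat \<Rightarrow> nat \<Rightarrow> (int \<Rightarrow> int) \<Rightarrow> (int \<Rightarrow> int) \<Rightarrow> ((int \<times> int) set \<Rightarrow> 'a) \<Rightarrow> 'a multiset" where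
  "tab_content k n lam mu R = image_mset R (mset_set (skew_boxes k n lam mu))"

text \<open>Formal power series in commuting variables (x_a)_{a::'a} with nat coefficients,
  represented as coefficient functions on monomials (finite multisets of variables).\<close>
type_synonym 'a fps_mv = "'a multiset \<Rightarrow> nat"

definition skew_schur :: "nat \<Rightarrow> nat \<Rightarrow> (int \<Rightarrow> int) \<Rightarrow> (int \<Rightarrow> int) \<Rightarrow> ('a::linorder) fps_mv" where
  "skew_schur k n lam mu = (\<lambda>m. card {R. ssct k n lam mu R \<and> tab_content k n lam mu R = m})"

definition fsummable :: "'i set \<Rightarrow> ('i \<Rightarrow> 'a fps_mv) \<Rightarrow> bool" where
  "fsummable I F \<longleftrightarrow> (\<forall>m. finite {i \<in> I. F i m \<noteq> 0})"

definition fsum :: "'i set \<Rightarrow> ('i \<Rightarrow> 'a fps_mv) \<Rightarrow> 'a fps_mv" where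
  "fsum I F = (\<lambda>m. \<Sum>i \<in> {i \<in> I. F i m \<noteq> 0}. F i m)"

end

theory Submission
  imports Defs
begin

locale cylk =
  fixes k n :: nat
  assumes k1: "1 \<le> k" and kn: "k < n"
begin

abbreviation "dd \<equiv> int n - int k"

lemma dd_pos: "dd > 0" using kn by simp
lemma kpos: "int k > 0" using k1 by simp

lemma cyl_step: "cylpar k n l \<Longrightarrow> l (x + int k) = l x - dd"
  unfolding cylpar_def by (metis add_diff_cancel_right')

lemma cyl_mono1: "cylpar k n l \<Longrightarrow> l (x + 1) \<le> l x"
  unfolding cylpar_def by blast

lemma cyl_shift_nat: "cylpar k n l \<Longrightarrow> l (x + int j * int k) = l x - int j * dd"
proof (induction j arbitrary: x)
  case 0 then show ?case by simp
next
  case (Suc j)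
  have "l (x + int (Suc j) * int k) = l ((x + int j * int k) + int k)" by (simp add: algebra_simps)
  also have "\<dots> = l (x + int j * int k) - dd" using cyl_step Suc.prems by blast
  also have "\<dots> = l x - int (Suc j) * dd" using Suc by (simp add: algebra_simps)
  finally show ?case .
qed

lemma cyl_shift: "cylpar k n l \<Longrightarrow> l (x + j * int k) = l x - j * dd"
proof (cases "j \<ge> 0")
  case True
  assume c: "cylpar k n l"
  obtain j' where "j = int j'" using True nonneg_eq_int by blast
  then show ?thesis using cyl_shift_nat[OF c] by simp
next
  case False
  assume c: "cylpar k n l"
  define j' where "j' = nat (- j)"
  have j': "j = - int j'" using False j'_def by simp
  have "l x = l ((x + j * int k) + int j' * int k) " using j' by simp
  also have "\<dots> = l (x + j * int k) - int j' * dd" using cyl_shift_nat[OF c] by blast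
  finally show ?thesis using j' by simp
qed

lemma cyl_mono_nat: "cylpar k n l \<Longrightarrow> l (x + int j) \<le> l x"
proof (induction j)
  case 0 then show ?case by simp
next
  case (Suc j)
  have "l (x + int (Suc j)) = l ((x + int j) + 1)" by (simp add: algebra_simps)
  also have "\<dots> \<le> l (x + int j)" using cyl_mono1 Suc.prems by blast
  finally show ?case using Suc by simp
qed

lemma cyl_mono: "cylpar k n l \<Longrightarrow> x \<le> x' \<Longrightarrow> l x' \<le> l x"
  using cyl_mono_nat[of l x "nat (x' - x)"] by simp

lemma cyl_rep: "cylpar k n l \<Longrightarrow> l x = l (x mod int k) - (x div int k) * dd"
  using cyl_shift[of l "x mod int k" "x div int k"] by (simp add: algebra_simps)

lemma cyl_eqI: "cylpar k n l \<Longrightarrow> cylpar k n l' \<Longrightarrow> (\<And>x. 0 \<le> x \<Longrightarrow> x < int k \<Longrightarrow> l x = l' x) \<Longrightarrow> l = l'"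
proof
  fix x assume c: "cylpar k n l" "cylpar k n l'" and h: "\<And>x. 0 \<le> x \<Longrightarrow> x < int k \<Longrightarrow> l x = l' x"
  have "l (x mod int k) = l' (x mod int k)" using h kpos by simp
  then show "l x = l' x" using cyl_rep[OF c(1), of x] cyl_rep[OF c(2), of x] by simp
qed

lemma cylparI: "(\<And>x. l (x + 1) \<le> l x) \<Longrightarrow> (\<And>x. l (x + int k) = l x - dd) \<Longrightarrow> cylpar k n l"
  unfolding cylpar_def by (metis add_diff_cancel_left' diff_add_cancel diff_diff_eq2)

lemma box_mem: "q \<in> box k n p \<longleftrightarrow> (\<exists>j. q = (fst p - j * int k, snd p + j * dd))"
  unfolding box_def by auto

lemma box_self: "p \<in> box k n p"
  unfolding box_mem by (rule exI[of _ 0]) simp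

lemma box_eq: "q \<in> box k n p \<Longrightarrow> box k n q = box k n p"
proof -
  assume "q \<in> box k n p"
  then obtain j where j: "q = (fst p - j * int k, snd p + j * dd)" unfolding box_mem by blast
  show ?thesis
  proof (rule set_eqI, rule iffI)
    fix r assume "r \<in> box k n q"
    then obtain i where "r = (fst q - i * int k, snd q + i * dd)" unfolding box_mem by blast
    then have "r = (fst p - (i+j) * int k, snd p + (i+j) * dd)" using j by (simp add: algebra_simps)
    then show "r \<in> box k n p" unfolding box_mem by blast
  next
    fix r assume "r \<in> box k n p"
    then obtain i where "r = (fst p - i * int k, snd p + i * dd)" unfolding box_mem by blast
    then have "r = (fst q - (i-j) * int k, snd q + (i-j) * dd)" using j by (simp add: algebra_simps)
    then show "r \<in> box k n q" unfolding box_mem by blast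
  qed
qed

lemma box_eq_iff: "box k n p = box k n q \<longleftrightarrow> q \<in> box k n p"
  using box_eq box_self by metis

lemma box_shift: "box k n (x - j * int k, y + j * dd) = box k n (x, y)"
  by (rule box_eq) (auto simp: box_mem)

lemma box_xk: "box k n (x + int k, y) = box k n (x, y + dd)"
  using box_shift[of "x + int k" 1 y] by simp

lemma in_part_shift: "cylpar k n l \<Longrightarrow> in_part l (x - j * int k, y + j * dd) \<longleftrightarrow> in_part l (x, y)"
  unfolding in_part_def using cyl_shift[of l x "-j"] by (simp add: algebra_simps)

lemma skew_shift: "cylpar k n l \<Longrightarrow> cylpar k n m \<Longrightarrow>
   (x - j * int k, y + j * dd) \<in> skew_points l m \<longleftrightarrow> (x, y) \<in> skew_points l m"
  unfolding skew_points_def using in_part_shift by simp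

lemma skew_box_closed: "cylpar k n l \<Longrightarrow> cylpar k n m \<Longrightarrow> q \<in> box k n p \<Longrightarrow>
   q \<in> skew_points l m \<longleftrightarrow> p \<in> skew_points l m"
proof -
  assume c: "cylpar k n l" "cylpar k n m" and "q \<in> box k n p"
  then obtain j where "q = (fst p - j * int k, snd p + j * dd)" unfolding box_mem by blast
  then show ?thesis using skew_shift[OF c, of "fst p" j "snd p"] by simp
qed

lemma mem_SB: "cylpar k n l \<Longrightarrow> cylpar k n m \<Longrightarrow> box k n p \<in> skew_boxes k n l m \<longleftrightarrow> p \<in> skew_points l m"
  unfolding skew_boxes_def
proof
  assume c: "cylpar k n l" "cylpar k n m" and "box k n p \<in> box k n ` skew_points l m"
  then obtain q where q: "q \<in> skew_points l m" "box k n p = box k n q" by blast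
  then have "p \<in> box k n q" using box_self by metis
  then show "p \<in> skew_points l m" using skew_box_closed[OF c] q(1) by blast
qed auto

lemma skew_points_iff: "(x, y) \<in> skew_points l m \<longleftrightarrow> m x < y \<and> y \<le> l x"
  unfolding skew_points_def in_part_def by auto

definition repr :: "int \<times> int \<Rightarrow> int \<times> int" where
  "repr p = (fst p mod int k, snd p + (fst p div int k) * dd)"

lemma repr_box: "repr p \<in> box k n p"
  unfolding repr_def box_mem by (rule exI[of _ "fst p div int k"]) (simp add: algebra_simps minus_div_mult_eq_mod)

lemma repr_range: "0 \<le> fst (repr p) \<and> fst (repr p) < int k"
  unfolding repr_def using kpos by simp

lemma box_rep_unique: "0 \<le> fst p \<Longrightarrow> fst p < int k \<Longrightarrow> 0 \<le> fst q \<Longrightarrow> fst q < int k \<Longrightarrow>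
   box k n p = box k n q \<Longrightarrow> p = q"
proof -
  assume a: "0 \<le> fst p" "fst p < int k" "0 \<le> fst q" "fst q < int k" "box k n p = box k n q"
  then obtain j where j: "q = (fst p - j * int k, snd p + j * dd)" unfolding box_eq_iff box_mem by blast
  have "j = 0"
  proof (rule ccontr)
    assume "j \<noteq> 0"
    then have "j \<ge> 1 \<or> j \<le> -1" by linarith
    then show False
    proof
      assume "j \<ge> 1" then have "j * int k \<ge> int k" using kpos by simp
      moreover have "fst q = fst p - j * int k" using j by simp
      ultimately show False using a by linarith
    next
      assume "j \<le> -1" then have "j * int k \<le> (-1) * int k" using kpos
        by (intro mult_right_mono) auto
      moreover have "fst q = fst p - j * int k" using j by simp
      ultimately show False using a by linarith
    qed
  qed
  then show ?thesis using j by simp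
qed

definition reps :: "(int \<Rightarrow> int) \<Rightarrow> (int \<Rightarrow> int) \<Rightarrow> (int \<times> int) set" where
  "reps l m = Sigma {0..<int k} (\<lambda>x. {m x<..l x})"

lemma SB_reps: "cylpar k n l \<Longrightarrow> cylpar k n m \<Longrightarrow> skew_boxes k n l m = box k n ` reps l m"
proof
  assume c: "cylpar k n l" "cylpar k n m"
  show "skew_boxes k n l m \<subseteq> box k n ` reps l m"
  proof
    fix B assume "B \<in> skew_boxes k n l m"
    then obtain p where p: "p \<in> skew_points l m" "B = box k n p" unfolding skew_boxes_def by blast
    have "repr p \<in> skew_points l m" using skew_box_closed[OF c repr_box] p by blast
    moreover have "box k n (repr p) = B" using p box_eq repr_box by metis
    moreover have "repr p \<in> reps l m"
    proof -
      obtain a b where ab: "repr p = (a, b)" by fastforce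
      show ?thesis using repr_range[of p] calculation(1) unfolding ab reps_def skew_points_iff by simp
    qed
    ultimately show "B \<in> box k n ` reps l m" by blast
  qed
next
  show "box k n ` reps l m \<subseteq> skew_boxes k n l m"
  proof
    fix B assume "B \<in> box k n ` reps l m"
    then obtain p where p: "p \<in> reps l m" "B = box k n p" by blast
    obtain a b where "p = (a, b)" by fastforce
    with p have "(a, b) \<in> reps l m" "B = box k n (a, b)" by auto
    then have "(a, b) \<in> skew_points l m" "B = box k n (a, b)" unfolding reps_def skew_points_iff by auto
    then show "B \<in> skew_boxes k n l m" unfolding skew_boxes_def by blast
  qed
qed

lemma inj_box_reps: "inj_on (box k n) (reps l m)"
  unfolding reps_def by (rule inj_onI) (use box_rep_unique in auto)

lemma finite_reps: "finite (reps l m)"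
  unfolding reps_def by auto

lemma finite_SB: "cylpar k n l \<Longrightarrow> cylpar k n m \<Longrightarrow> finite (skew_boxes k n l m)"
  using SB_reps finite_reps by simp

definition sz :: "(int \<Rightarrow> int) \<Rightarrow> (int \<Rightarrow> int) \<Rightarrow> int" where
  "sz l m = (\<Sum>x\<in>{0..<int k}. l x - m x)"

lemma card_SB: "cylpar k n l \<Longrightarrow> cylpar k n m \<Longrightarrow> subpart m l \<Longrightarrow> int (card (skew_boxes k n l m)) = sz l m"
proof -
  assume c: "cylpar k n l" "cylpar k n m" "subpart m l"
  have "card (skew_boxes k n l m) = card (reps l m)"
    using SB_reps[OF c(1,2)] inj_box_reps card_image by metis
  also have "\<dots> = (\<Sum>x\<in>{0..<int k}. card {m x<..l x})" unfolding reps_def by (simp add: card_SigmaI)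
  finally have "int (card (skew_boxes k n l m)) = (\<Sum>x\<in>{0..<int k}. int (card {m x<..l x}))" by simp
  also have "\<dots> = sz l m" unfolding sz_def using c(3) unfolding subpart_def by (intro sum.cong) auto
  finally show ?thesis .
qed

lemma sum_shift_m1: assumes per: "\<And>x. g (x + int k) = g x"
  shows "(\<Sum>x\<in>{0..<int k}. g (x - 1)) = (\<Sum>x\<in>{0..<int k}. (g x :: int))"
proof -
  have "(\<Sum>x\<in>{0..<int k}. g (x - 1)) = sum g ((\<lambda>x. x - 1) ` {0..<int k})"
    by (subst sum.reindex) (auto simp: inj_on_def)
  also have "(\<lambda>x. x - 1) ` {0..<int k} = insert (-1) {0..<int k - 1}"
  proof (rule set_eqI)
    fix x :: int
    show "x \<in> (\<lambda>x. x - 1) ` {0..<int k} \<longleftrightarrow> x \<in> insert (-1) {0..<int k - 1}"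
    proof
      assume "x \<in> (\<lambda>x. x - 1) ` {0..<int k}" then show "x \<in> insert (-1) {0..<int k - 1}" by auto
    next
      assume "x \<in> insert (-1) {0..<int k - 1}"
      then have "x + 1 \<in> {0..<int k}" using kpos by auto
      then show "x \<in> (\<lambda>x. x - 1) ` {0..<int k}" by (rule rev_image_eqI) simp
    qed
  qed
  also have "sum g \<dots> = g (-1) + sum g {0..<int k - 1}" by simp
  also have "g (-1) = g (int k - 1)" using per[of "-1"] by simp
  also have "g (int k - 1) + sum g {0..<int k - 1} = sum g (insert (int k - 1) {0..<int k - 1})" by simp
  also have "insert (int k - 1) {0..<int k - 1} = {0..<int k}" using kpos by auto
  finally show ?thesis .
qed

lemma sum_shift_p1: assumes per: "\<And>x. g (x + int k) = g x"
  shows "(\<Sum>x\<in>{0..<int k}. g (x + 1)) = (\<Sum>x\<in>{0..<int k}. (g x :: int))"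
proof -
  have "\<And>x. g (x + int k + 1) = g (x + 1)" using per by (metis add.commute add.left_commute)
  then have "(\<Sum>x\<in>{0..<int k}. g (x + 1 - 1)) = (\<Sum>x\<in>{0..<int k}. g (x + 1))"
    using sum_shift_m1[of "\<lambda>x. g (x + 1)"] by (simp add: algebra_simps)
  then show ?thesis by simp
qed

end

context cylk begin

lemma finite_cyl_bounded: "finite {v. cylpar k n v \<and> (\<forall>x\<in>{0..<int k}. lo x \<le> v x \<and> v x \<le> hi x)}"
  (is "finite ?F")
proof -
  have inj: "inj_on (\<lambda>v. restrict v {0..<int k}) ?F"
  proof (rule inj_onI)
    fix v w assume "v \<in> ?F" "w \<in> ?F" "restrict v {0..<int k} = restrict w {0..<int k}"
    then have vw: "cylpar k n v" "cylpar k n w" "restrict v {0..<int k} = restrict w {0..<int k}" by auto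
    show "v = w"
    proof (rule cyl_eqI[OF vw(1,2)])
      fix x :: int assume "0 \<le> x" "x < int k"
      then show "v x = w x" using fun_cong[OF vw(3), of x] by simp
    qed
  qed
  have "(\<lambda>v. restrict v {0..<int k}) ` ?F \<subseteq> PiE {0..<int k} (\<lambda>x. {lo x..hi x})" by auto
  moreover have "finite (PiE {0..<int k} (\<lambda>x. {lo x..hi x}))" by (intro finite_PiE) auto
  ultimately have "finite ((\<lambda>v. restrict v {0..<int k}) ` ?F)" by (rule finite_subset)
  then show ?thesis using inj by (rule finite_imageD)
qed

lemma tab_val: "cylpar k n l \<Longrightarrow> cylpar k n m \<Longrightarrow> tab_content k n l m R = M \<Longrightarrow> B \<in> skew_boxes k n l m \<Longrightarrow> R B \<in># M"
  unfolding tab_content_def using finite_SB by auto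

lemma finite_tabs: "cylpar k n l \<Longrightarrow> cylpar k n m \<Longrightarrow> finite {R. ssct k n l m R \<and> tab_content k n l m R = M}"
proof -
  assume c: "cylpar k n l" "cylpar k n m"
  have "{R. ssct k n l m R \<and> tab_content k n l m R = M} \<subseteq> PiE (skew_boxes k n l m) (\<lambda>_. set_mset M)"
  proof
    fix R assume "R \<in> {R. ssct k n l m R \<and> tab_content k n l m R = M}"
    then have "R \<in> extensional (skew_boxes k n l m)" "tab_content k n l m R = M" unfolding ssct_def by auto
    then show "R \<in> PiE (skew_boxes k n l m) (\<lambda>_. set_mset M)" using tab_val[OF c] unfolding PiE_def Pi_def by blast
  qed
  moreover have "finite (PiE (skew_boxes k n l m) (\<lambda>_. set_mset M))"
    using finite_SB[OF c] by (intro finite_PiE) auto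
  ultimately show ?thesis using finite_subset by blast
qed

definition strip :: "(int \<Rightarrow> int) \<Rightarrow> (int \<Rightarrow> int) \<Rightarrow> nat \<Rightarrow> bool" where
  "strip l v c \<longleftrightarrow> (\<forall>x. l (x + 1) \<le> v x \<and> v x \<le> l x) \<and> sz l v = int c"

lemma ss_single:
  assumes c: "cylpar k n l" "cylpar k n v" "subpart v l"
  shows "skew_schur k n l v (replicate_mset c a) = (if strip l v c then 1 else 0)"
proof -
  let ?SB = "skew_boxes k n l v"
  let ?T = "{R. ssct k n l v R \<and> tab_content k n l v R = replicate_mset c a}"
  have fin: "finite ?SB" using finite_SB c by blast
  have sk: "\<And>x y. (x, y) \<in> skew_points l v \<Longrightarrow> box k n (x, y) \<in> ?SB" using mem_SB c by blast
  show ?thesis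
  proof (cases "strip l v c")
    case True
    let ?R0 = "restrict (\<lambda>_. a) ?SB"
    have norow: False if "(x1, y) \<in> skew_points l v" "(x2, y) \<in> skew_points l v" "x1 < x2" for x1 x2 y
    proof -
      have "l x2 \<le> l (x1 + 1)" using cyl_mono[OF c(1)] that(3) by simp
      also have "\<dots> \<le> v x1" using True unfolding strip_def by blast
      finally show False using that unfolding skew_points_iff by simp
    qed
    have "?R0 \<in> ?T"
    proof -
      have "ssct k n l v ?R0" unfolding ssct_def
      proof (intro conjI allI impI)
        show "?R0 \<in> extensional ?SB" by simp
      next
        fix x y1 y2 assume "(x, y1) \<in> skew_points l v \<and> (x, y2) \<in> skew_points l v \<and> y1 < y2"
        then show "?R0 (box k n (x, y1)) \<le> ?R0 (box k n (x, y2))" using sk by simp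
      next
        fix x1 x2 y assume "(x1, y) \<in> skew_points l v \<and> (x2, y) \<in> skew_points l v \<and> x1 < x2"
        then show "?R0 (box k n (x1, y)) < ?R0 (box k n (x2, y))" using norow by blast
      qed
      moreover have "tab_content k n l v ?R0 = replicate_mset c a"
      proof -
        have "tab_content k n l v ?R0 = image_mset (\<lambda>_. a) (mset_set ?SB)"
          unfolding tab_content_def by (intro image_mset_cong) (simp add: fin)
        also have "\<dots> = replicate_mset (card ?SB) a" by (simp add: image_mset_const_eq)
        also have "card ?SB = c" using card_SB[OF c] True unfolding strip_def by simp
        finally show ?thesis .
      qed
      ultimately show ?thesis by blast
    qed
    moreover have "R = ?R0" if "R \<in> ?T" for R
    proof
      fix B show "R B = ?R0 B"
      proof (cases "B \<in> ?SB")
        case True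
        then have "R B \<in># replicate_mset c a" using tab_val[OF c(1,2)] that by blast
        then show ?thesis using True by (simp split: if_splits)
      next
        case False
        then show ?thesis using that unfolding ssct_def extensional_def by auto
      qed
    qed
    ultimately have "?T = {?R0}" by blast
    then show ?thesis using True unfolding skew_schur_def by simp
  next
    case False
    have "?T = {}"
    proof (rule ccontr)
      assume "?T \<noteq> {}"
      then obtain R where R: "ssct k n l v R" "tab_content k n l v R = replicate_mset c a" by blast
      show False
      proof (cases "sz l v = int c")
        case False
        have "size (tab_content k n l v R) = card ?SB" unfolding tab_content_def by (simp add: fin)
        then show False using R(2) card_SB[OF c] False by simp
      next
        case True
        then obtain x where x: "\<not> l (x + 1) \<le> v x" using \<open>\<not> strip l v c\<close> c(3) unfolding strip_def subpart_def by blast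
        let ?y = "l (x + 1)"
        have p1: "(x, ?y) \<in> skew_points l v" using x cyl_mono1[OF c(1), of x] unfolding skew_points_iff by simp
        have p2: "(x + 1, ?y) \<in> skew_points l v" using x cyl_mono1[OF c(2), of x] unfolding skew_points_iff by simp
        have "R (box k n (x, ?y)) < R (box k n (x + 1, ?y))" using R(1) p1 p2 unfolding ssct_def by auto
        moreover have "R (box k n (x, ?y)) \<in># replicate_mset c a" "R (box k n (x + 1, ?y)) \<in># replicate_mset c a"
          using tab_val[OF c(1,2) R(2)] sk p1 p2 by auto
        ultimately show False by (simp split: if_splits)
      qed
    qed
    then show ?thesis using False unfolding skew_schur_def by (simp only: card.empty) simp
  qed
qed

end

lemma filter_all: "(\<forall>x\<in>#X. P x) \<Longrightarrow> filter_mset P X = X" by (induction X) auto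
lemma filter_none: "(\<forall>x\<in>#X. \<not> P x) \<Longrightarrow> filter_mset P X = {#}" by (induction X) auto

context cylk begin

definition cutf :: "((int \<times> int) set \<Rightarrow> 'a) \<Rightarrow> ('a \<Rightarrow> bool) \<Rightarrow> (int \<Rightarrow> int) \<Rightarrow> (int \<Rightarrow> int) \<Rightarrow> int \<Rightarrow> int" where
  "cutf R P l m x = (let A = {y. m x < y \<and> y \<le> l x \<and> \<not> P (R (box k n (x, y)))} in if A = {} then l x else Min A - 1)"

lemma cut_char:
  assumes "m x \<le> c" "c \<le> l x" "\<And>y. m x < y \<Longrightarrow> y \<le> l x \<Longrightarrow> (\<not> P (R (box k n (x, y))) \<longleftrightarrow> c < y)"
  shows "cutf R P l m x = c"
proof -
  define A where "A = {y. m x < y \<and> y \<le> l x \<and> \<not> P (R (box k n (x, y)))}"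
  have A: "A = {c<..l x}"
  proof (rule set_eqI)
    fix y show "y \<in> A \<longleftrightarrow> y \<in> {c<..l x}" unfolding A_def using assms(1) assms(3)[of y] by auto
  qed
  show ?thesis
  proof (cases "c = l x")
    case True then show ?thesis unfolding cutf_def Let_def A_def[symmetric] A by simp
  next
    case False
    then have "A \<noteq> {}" "Min A = c + 1" unfolding A using assms(2)
      by (auto intro!: Min_eqI)
    then show ?thesis unfolding cutf_def Let_def A_def[symmetric] by simp
  qed
qed

lemma cut_props:
  assumes down: "\<And>u v. v \<le> u \<Longrightarrow> P u \<Longrightarrow> P v" and mle: "m x \<le> l x"
    and col: "\<And>y1 y2. (x, y1) \<in> skew_points l m \<Longrightarrow> (x, y2) \<in> skew_points l m \<Longrightarrow> y1 < y2 \<Longrightarrow>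
         R (box k n (x, y1)) \<le> R (box k n (x, y2))"
  shows "m x \<le> cutf R P l m x \<and> cutf R P l m x \<le> l x \<and>
     (\<forall>y. m x < y \<and> y \<le> l x \<longrightarrow> (\<not> P (R (box k n (x, y))) \<longleftrightarrow> cutf R P l m x < y))"
proof -
  define A where "A = {y. m x < y \<and> y \<le> l x \<and> \<not> P (R (box k n (x, y)))}"
  have finA: "finite A" unfolding A_def by (rule finite_subset[of _ "{m x<..l x}"]) auto
  have up: "y' \<in> A" if "y \<in> A" "y \<le> y'" "y' \<le> l x" for y y'
  proof (cases "y = y'")
    case False
    then have "R (box k n (x, y)) \<le> R (box k n (x, y'))" using col that unfolding A_def skew_points_iff by auto
    then show ?thesis using that down unfolding A_def by auto
  qed (use that in auto)
  show ?thesis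
  proof (cases "A = {}")
    case True
    then have "cutf R P l m x = l x" unfolding cutf_def Let_def A_def[symmetric] by simp
    with mle show ?thesis using True unfolding A_def by auto
  next
    case False
    then have c: "cutf R P l m x = Min A - 1" unfolding cutf_def Let_def A_def[symmetric] by simp
    have MA: "Min A \<in> A" using False finA by simp
    have Mle: "\<And>y. y \<in> A \<Longrightarrow> Min A \<le> y" using finA by simp
    show ?thesis unfolding c
    proof (intro conjI allI impI)
      show "m x \<le> Min A - 1" using MA unfolding A_def by auto
      show "Min A - 1 \<le> l x" using MA unfolding A_def by auto
      fix y assume y: "m x < y \<and> y \<le> l x"
      show "\<not> P (R (box k n (x, y))) \<longleftrightarrow> Min A - 1 < y"
      proof
        assume "\<not> P (R (box k n (x, y)))" then have "y \<in> A" using y unfolding A_def by auto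
        then show "Min A - 1 < y" using Mle by fastforce
      next
        assume "Min A - 1 < y" then have "y \<in> A" using up[OF MA, of y] y by auto
        then show "\<not> P (R (box k n (x, y)))" unfolding A_def by auto
      qed
    qed
  qed
qed

end

context cylk begin

definition Btw :: "(int \<Rightarrow> int) \<Rightarrow> (int \<Rightarrow> int) \<Rightarrow> (int \<Rightarrow> int) set" where
  "Btw l m = {v. cylpar k n v \<and> subpart m v \<and> subpart v l}"

lemma finite_Btw: "finite (Btw l m)"
  by (rule finite_subset[OF _ finite_cyl_bounded[of m l]]) (auto simp: Btw_def subpart_def)

lemma parts:
  assumes "cylpar k n l" "cylpar k n m" "cylpar k n v" "(x, y) \<in> skew_points l m"
  shows "(box k n (x, y) \<in> skew_boxes k n v m \<longleftrightarrow> y \<le> v x) \<and> (box k n (x, y) \<in> skew_boxes k n l v \<longleftrightarrow> v x < y)"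
  using mem_SB[OF assms(3,2), of "(x, y)"] mem_SB[OF assms(1,3), of "(x, y)"] assms(4) unfolding skew_points_iff by auto

lemma SB_split:
  assumes "cylpar k n l" "cylpar k n m" "v \<in> Btw l m"
  shows "skew_boxes k n l m = skew_boxes k n v m \<union> skew_boxes k n l v"
    "skew_boxes k n v m \<inter> skew_boxes k n l v = {}"
proof -
  have cv: "cylpar k n v" "subpart m v" "subpart v l" using assms(3) unfolding Btw_def by auto
  have "skew_points l m = skew_points v m \<union> skew_points l v"
  proof (rule set_eqI)
    fix p :: "int \<times> int"
    obtain x y where p: "p = (x, y)" by fastforce
    show "p \<in> skew_points l m \<longleftrightarrow> p \<in> skew_points v m \<union> skew_points l v"
      unfolding p skew_points_iff Un_iff using cv(2,3) unfolding subpart_def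
      by (metis dual_order.trans le_less_trans not_le)
  qed
  then show "skew_boxes k n l m = skew_boxes k n v m \<union> skew_boxes k n l v"
    unfolding skew_boxes_def by (simp add: image_Un)
  show "skew_boxes k n v m \<inter> skew_boxes k n l v = {}"
  proof (rule ccontr)
    assume "skew_boxes k n v m \<inter> skew_boxes k n l v \<noteq> {}"
    then obtain p where p: "p \<in> skew_points v m" "box k n p \<in> skew_boxes k n l v"
      unfolding skew_boxes_def by blast
    then have "p \<in> skew_points l v" using mem_SB[OF assms(1) cv(1)] by blast
    then show False using p(1) unfolding skew_points_def in_part_def by auto
  qed
qed

lemma tab_split:
  assumes "cylpar k n l" "cylpar k n m" "v \<in> Btw l m"
  shows "tab_content k n l m R = tab_content k n v m R + tab_content k n l v R"
proof -
  have cv: "cylpar k n v" using assms(3) unfolding Btw_def by auto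
  show ?thesis unfolding tab_content_def SB_split(1)[OF assms]
    by (subst mset_set_Union) (use finite_SB assms cv SB_split(2)[OF assms] in auto)
qed

end

context cylk begin

context
  fixes l m :: "int \<Rightarrow> int" and P :: "'a::linorder \<Rightarrow> bool" and M :: "'a multiset"
  assumes cl: "cylpar k n l" and cm: "cylpar k n m" and ml: "subpart m l"
    and down: "\<And>u v. v \<le> u \<Longrightarrow> P u \<Longrightarrow> P v"
begin

lemma Pless: "P u \<Longrightarrow> \<not> P v \<Longrightarrow> u < v"
  using down by (meson not_le)

definition "T1 v = {R. ssct k n v m R \<and> tab_content k n v m R = filter_mset P M}"
definition "T2 v = {R. ssct k n l v R \<and> tab_content k n l v R = filter_mset (\<lambda>x. \<not> P x) M}"
definition "SS = {R. ssct k n l m R \<and> tab_content k n l m (R :: (int \<times> int) set \<Rightarrow> 'a) = M}"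
definition "comb v R1 R2 = (\<lambda>B. if B \<in> skew_boxes k n v m then R1 B else (R2 B :: 'a))"
definition "fwd R = (cutf R P l m, restrict R (skew_boxes k n (cutf R P l m) m),
                     restrict R (skew_boxes k n l (cutf R P l m)))"

lemma comb_props:
  assumes v: "v \<in> Btw l m" and R1: "R1 \<in> T1 v" and R2: "R2 \<in> T2 v"
  shows "comb v R1 R2 \<in> SS \<and> fwd (comb v R1 R2) = (v, R1, R2)"
proof -
  have cv: "cylpar k n v" "subpart m v" "subpart v l" using v unfolding Btw_def by auto
  let ?R = "comb v R1 R2"
  have R1s: "ssct k n v m R1" "tab_content k n v m R1 = filter_mset P M" using R1 unfolding T1_def by auto
  have R2s: "ssct k n l v R2" "tab_content k n l v R2 = filter_mset (\<lambda>x. \<not> P x) M" using R2 unfolding T2_def by auto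
  have val: "?R (box k n (x, y)) = (if y \<le> v x then R1 (box k n (x, y)) else R2 (box k n (x, y)))
      \<and> (y \<le> v x \<longrightarrow> (x, y) \<in> skew_points v m \<and> P (?R (box k n (x, y))))
      \<and> (\<not> y \<le> v x \<longrightarrow> (x, y) \<in> skew_points l v \<and> \<not> P (?R (box k n (x, y))))"
    if p: "(x, y) \<in> skew_points l m" for x y
  proof -
    have pa: "(box k n (x, y) \<in> skew_boxes k n v m \<longleftrightarrow> y \<le> v x) \<and> (box k n (x, y) \<in> skew_boxes k n l v \<longleftrightarrow> v x < y)"
      using parts[OF cl cm cv(1) p] .
    have i1: "y \<le> v x \<Longrightarrow> (x, y) \<in> skew_points v m" using p unfolding skew_points_iff by auto
    have i2: "\<not> y \<le> v x \<Longrightarrow> (x, y) \<in> skew_points l v" using p unfolding skew_points_iff by auto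
    have "y \<le> v x \<Longrightarrow> R1 (box k n (x, y)) \<in># filter_mset P M"
      using tab_val[OF cv(1) cm R1s(2)] pa by blast
    moreover have "\<not> y \<le> v x \<Longrightarrow> R2 (box k n (x, y)) \<in># filter_mset (\<lambda>x. \<not> P x) M"
      using tab_val[OF cl cv(1) R2s(2)] pa by auto
    ultimately show ?thesis using pa i1 i2 unfolding comb_def by auto
  qed
  have ss: "ssct k n l m ?R" unfolding ssct_def
  proof (intro conjI allI impI)
    show "?R \<in> extensional (skew_boxes k n l m)"
      unfolding extensional_def comb_def
    proof (intro CollectI allI impI)
      fix B assume "B \<notin> skew_boxes k n l m"
      then have "B \<notin> skew_boxes k n v m" "B \<notin> skew_boxes k n l v" using SB_split(1)[OF cl cm v] by auto
      then show "(if B \<in> skew_boxes k n v m then R1 B else R2 B) = undefined"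
        using R2s(1) unfolding ssct_def extensional_def by auto
    qed
  next
    fix x y1 y2 assume a: "(x, y1) \<in> skew_points l m \<and> (x, y2) \<in> skew_points l m \<and> y1 < y2"
    have v1: "?R (box k n (x, y1)) \<le> ?R (box k n (x, y2))" if "y2 \<le> v x"
    proof -
      have "y1 \<le> v x" using that a by auto
      then show "?R (box k n (x, y1)) \<le> ?R (box k n (x, y2))" using val[of x y1] val[of x y2] a that R1s(1) unfolding ssct_def by auto
    qed
    have v2: "?R (box k n (x, y1)) \<le> ?R (box k n (x, y2))" if "\<not> y1 \<le> v x"
    proof -
      have "\<not> y2 \<le> v x" using that a by auto
      then show "?R (box k n (x, y1)) \<le> ?R (box k n (x, y2))" using val[of x y1] val[of x y2] a that R2s(1) unfolding ssct_def by auto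
    qed
    have v3: "?R (box k n (x, y1)) \<le> ?R (box k n (x, y2))" if "y1 \<le> v x" "\<not> y2 \<le> v x"
      using val[of x y1] val[of x y2] a that Pless less_imp_le by metis
    show "?R (box k n (x, y1)) \<le> ?R (box k n (x, y2))" using v1 v2 v3 by blast
  next
    fix x1 x2 y assume a: "(x1, y) \<in> skew_points l m \<and> (x2, y) \<in> skew_points l m \<and> x1 < x2"
    have mono: "v x2 \<le> v x1" using cyl_mono[OF cv(1)] a by simp
    have v1: "?R (box k n (x1, y)) < ?R (box k n (x2, y))" if "y \<le> v x2"
    proof -
      have "y \<le> v x1" using that mono by auto
      then show "?R (box k n (x1, y)) < ?R (box k n (x2, y))" using val[of x1 y] val[of x2 y] a that R1s(1) unfolding ssct_def by auto
    qed
    have v2: "?R (box k n (x1, y)) < ?R (box k n (x2, y))" if "\<not> y \<le> v x1"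
    proof -
      have "\<not> y \<le> v x2" using that mono by auto
      then show ?thesis using val[of x1 y] val[of x2 y] a that R2s(1) unfolding ssct_def by auto
    qed
    have v3: "?R (box k n (x1, y)) < ?R (box k n (x2, y))" if "y \<le> v x1" "\<not> y \<le> v x2"
      using val[of x1 y] val[of x2 y] a that Pless by metis
    show "?R (box k n (x1, y)) < ?R (box k n (x2, y))" using v1 v2 v3 by blast
  qed
  have t1: "tab_content k n v m ?R = tab_content k n v m R1"
    unfolding tab_content_def by (intro image_mset_cong) (simp add: comb_def finite_SB[OF cv(1) cm])
  have t2: "tab_content k n l v ?R = tab_content k n l v R2"
    unfolding tab_content_def using SB_split(2)[OF cl cm v]
    by (intro image_mset_cong) (auto simp add: comb_def finite_SB[OF cl cv(1)])
  have tc: "tab_content k n l m ?R = M"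
    unfolding tab_split[OF cl cm v] t1 t2 R1s(2) R2s(2) by (rule multiset_partition[symmetric])
  have cut: "cutf ?R P l m = v"
  proof
    fix x show "cutf ?R P l m x = v x"
    proof (rule cut_char)
      show "m x \<le> v x" "v x \<le> l x" using cv unfolding subpart_def by auto
      fix y assume "m x < y" "y \<le> l x"
      then have "(x, y) \<in> skew_points l m" unfolding skew_points_iff by auto
      then show "(\<not> P (?R (box k n (x, y)))) = (v x < y)" using val[of x y] by auto
    qed
  qed
  have r1: "restrict ?R (skew_boxes k n v m) = R1"
  proof
    fix B show "restrict ?R (skew_boxes k n v m) B = R1 B"
      using R1s(1) unfolding ssct_def extensional_def comb_def by auto
  qed
  have r2: "restrict ?R (skew_boxes k n l v) = R2"
  proof
    fix B show "restrict ?R (skew_boxes k n l v) B = R2 B"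
      using R2s(1) SB_split(2)[OF cl cm v] unfolding ssct_def extensional_def comb_def by auto
  qed
  show ?thesis using ss tc cut r1 r2 unfolding SS_def fwd_def by simp
qed


lemma fwd_props:
  assumes R: "R \<in> SS"
  shows "cutf R P l m \<in> Btw l m \<and> restrict R (skew_boxes k n (cutf R P l m) m) \<in> T1 (cutf R P l m)
    \<and> restrict R (skew_boxes k n l (cutf R P l m)) \<in> T2 (cutf R P l m)
    \<and> comb (cutf R P l m) (restrict R (skew_boxes k n (cutf R P l m) m)) (restrict R (skew_boxes k n l (cutf R P l m))) = R"
proof -
  have Rs: "ssct k n l m R" "tab_content k n l m R = M" using R unfolding SS_def by auto
  define v where "v = cutf R P l m"
  have cp: "m x \<le> v x \<and> v x \<le> l x \<and> (\<forall>y. m x < y \<and> y \<le> l x \<longrightarrow> (\<not> P (R (box k n (x, y))) \<longleftrightarrow> v x < y))" for x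
    unfolding v_def
  proof (rule cut_props)
    show "\<And>u v. v \<le> u \<Longrightarrow> P u \<Longrightarrow> P v" using down by blast
    show "m x \<le> l x" using ml unfolding subpart_def by blast
    fix y1 y2 assume "(x, y1) \<in> skew_points l m" "(x, y2) \<in> skew_points l m" "y1 < y2"
    then show "R (box k n (x, y1)) \<le> R (box k n (x, y2))" using Rs(1) unfolding ssct_def by blast
  qed
  have row: "R (box k n (x1, y)) < R (box k n (x2, y))" if "(x1, y) \<in> skew_points l m" "(x2, y) \<in> skew_points l m" "x1 < x2" for x1 x2 y
    using Rs(1) that unfolding ssct_def by blast
  have vper: "v (x + int k) = v x - dd" for x
  proof -
    have "cutf R P l m (x + int k) = v x - dd"
    proof (rule cut_char)
      show "m (x + int k) \<le> v x - dd" "v x - dd \<le> l (x + int k)" using cp[of x] cyl_step[OF cl] cyl_step[OF cm] by auto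
      fix y assume y: "m (x + int k) < y" "y \<le> l (x + int k)"
      then have "m x < y + dd" "y + dd \<le> l x" using cyl_step[OF cl] cyl_step[OF cm] by auto
      then show "(\<not> P (R (box k n (x + int k, y)))) = (v x - dd < y)" using cp[of x] box_xk by auto
    qed
    then show ?thesis unfolding v_def .
  qed
  have vmono: "v (x + 1) \<le> v x" for x
  proof (rule ccontr)
    assume a: "\<not> v (x + 1) \<le> v x"
    let ?y = "v (x + 1)"
    have "m (x + 1) \<le> m x" "l (x + 1) \<le> l x" using cyl_mono1 cl cm by auto
    then have p1: "(x, ?y) \<in> skew_points l m" "(x + 1, ?y) \<in> skew_points l m"
      using a cp[of x] cp[of "x+1"] unfolding skew_points_iff by auto
    have "\<not> P (R (box k n (x, ?y)))" using cp[of x] p1(1) a unfolding skew_points_iff by auto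
    moreover have "P (R (box k n (x + 1, ?y)))" using cp[of "x+1"] p1(2) unfolding skew_points_iff by auto
    moreover have "R (box k n (x, ?y)) < R (box k n (x + 1, ?y))" using row p1 by simp
    ultimately show False using down less_imp_le by blast
  qed
  have cv: "cylpar k n v" by (rule cylparI) (use vmono vper in auto)
  have vB: "v \<in> Btw l m" unfolding Btw_def subpart_def using cv cp by auto
  have val: "(y \<le> v x \<longrightarrow> (x, y) \<in> skew_points v m \<and> P (R (box k n (x, y))))
      \<and> (\<not> y \<le> v x \<longrightarrow> (x, y) \<in> skew_points l v \<and> \<not> P (R (box k n (x, y))))"
    if p: "(x, y) \<in> skew_points l m" for x y
    using p cp[of x] unfolding skew_points_iff by auto
  let ?R1 = "restrict R (skew_boxes k n v m)" and ?R2 = "restrict R (skew_boxes k n l v)"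
  have sub1: "skew_points v m \<subseteq> skew_points l m"
  proof
    fix p assume "p \<in> skew_points v m" then show "p \<in> skew_points l m"
      using cp[of "fst p"] unfolding skew_points_def in_part_def by auto
  qed
  have sub2: "skew_points l v \<subseteq> skew_points l m"
  proof
    fix p assume "p \<in> skew_points l v" then show "p \<in> skew_points l m"
      using cp[of "fst p"] unfolding skew_points_def in_part_def by auto
  qed
  have mem1: "\<And>p. p \<in> skew_points v m \<Longrightarrow> box k n p \<in> skew_boxes k n v m"
    and mem2: "\<And>p. p \<in> skew_points l v \<Longrightarrow> box k n p \<in> skew_boxes k n l v"
    unfolding skew_boxes_def by auto
  have sp: "tab_content k n l m R = tab_content k n v m R + tab_content k n l v R" by (rule tab_split[OF cl cm vB])
  have allP: "\<forall>a\<in>#tab_content k n v m R. P a"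
  proof
    fix a assume "a \<in># tab_content k n v m R"
    then obtain B where "B \<in> skew_boxes k n v m" "a = R B" unfolding tab_content_def using finite_SB[OF cv cm] by auto
    then obtain p where p: "p \<in> skew_points v m" "a = R (box k n p)" unfolding skew_boxes_def by auto
    then have pp: "m (fst p) < snd p" "snd p \<le> v (fst p)" unfolding skew_points_def in_part_def by auto
    then have "(fst p, snd p) \<in> skew_points l m" using cp[of "fst p"] unfolding skew_points_iff by auto
    then show "P a" using val[of "fst p" "snd p"] pp p(2) by simp
  qed
  have allN: "\<forall>a\<in>#tab_content k n l v R. \<not> P a"
  proof
    fix a assume "a \<in># tab_content k n l v R"
    then obtain B where "B \<in> skew_boxes k n l v" "a = R B" unfolding tab_content_def using finite_SB[OF cl cv] by auto
    then obtain p where p: "p \<in> skew_points l v" "a = R (box k n p)" unfolding skew_boxes_def by auto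
    then have pp: "v (fst p) < snd p" "snd p \<le> l (fst p)" unfolding skew_points_def in_part_def by auto
    then have "(fst p, snd p) \<in> skew_points l m" using cp[of "fst p"] unfolding skew_points_iff by auto
    then show "\<not> P a" using val[of "fst p" "snd p"] pp p(2) by simp
  qed
  have f1: "filter_mset P M = tab_content k n v m R"
    unfolding Rs(2)[symmetric] sp filter_union_mset filter_all[OF allP] filter_none[OF allN] by simp
  have f2: "filter_mset (\<lambda>x. \<not> P x) M = tab_content k n l v R"
    unfolding Rs(2)[symmetric] sp filter_union_mset
    using filter_all[OF allN] filter_none[of "tab_content k n v m R" "\<lambda>x. \<not> P x"] allP by simp
  have t1: "tab_content k n v m ?R1 = tab_content k n v m R"
    unfolding tab_content_def by (intro image_mset_cong) (simp add: finite_SB[OF cv cm])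
  have t2: "tab_content k n l v ?R2 = tab_content k n l v R"
    unfolding tab_content_def by (intro image_mset_cong) (simp add: finite_SB[OF cl cv])
  have s1: "ssct k n v m ?R1" unfolding ssct_def
  proof (intro conjI allI impI)
    show "?R1 \<in> extensional (skew_boxes k n v m)" by simp
  next
    fix x y1 y2 assume "(x, y1) \<in> skew_points v m \<and> (x, y2) \<in> skew_points v m \<and> y1 < y2"
    then show "?R1 (box k n (x, y1)) \<le> ?R1 (box k n (x, y2))"
      using Rs(1) sub1 mem1 unfolding ssct_def by (simp add: subset_iff)
  next
    fix x1 x2 y assume "(x1, y) \<in> skew_points v m \<and> (x2, y) \<in> skew_points v m \<and> x1 < x2"
    then show "?R1 (box k n (x1, y)) < ?R1 (box k n (x2, y))"
      using Rs(1) sub1 mem1 unfolding ssct_def by (simp add: subset_iff)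
  qed
  have s2: "ssct k n l v ?R2" unfolding ssct_def
  proof (intro conjI allI impI)
    show "?R2 \<in> extensional (skew_boxes k n l v)" by simp
  next
    fix x y1 y2 assume "(x, y1) \<in> skew_points l v \<and> (x, y2) \<in> skew_points l v \<and> y1 < y2"
    then show "?R2 (box k n (x, y1)) \<le> ?R2 (box k n (x, y2))"
      using Rs(1) sub2 mem2 unfolding ssct_def by (simp add: subset_iff)
  next
    fix x1 x2 y assume "(x1, y) \<in> skew_points l v \<and> (x2, y) \<in> skew_points l v \<and> x1 < x2"
    then show "?R2 (box k n (x1, y)) < ?R2 (box k n (x2, y))"
      using Rs(1) sub2 mem2 unfolding ssct_def by (simp add: subset_iff)
  qed
  have cb: "comb v ?R1 ?R2 = R"
  proof
    fix B show "comb v ?R1 ?R2 B = R B"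
    proof (cases "B \<in> skew_boxes k n l m")
      case True then show ?thesis using SB_split(1)[OF cl cm vB] unfolding comb_def by auto
    next
      case False then show ?thesis using SB_split(1)[OF cl cm vB] Rs(1) unfolding comb_def ssct_def extensional_def by auto
    qed
  qed
  have "?R1 \<in> T1 v" unfolding T1_def using s1 t1 f1 by simp
  moreover have "?R2 \<in> T2 v" unfolding T2_def using s2 t2 f2 by simp
  ultimately show ?thesis unfolding v_def[symmetric] using vB cb by blast
qed

lemma split_card: "card SS = (\<Sum>v\<in>Btw l m. card (T1 v) * card (T2 v))"
proof -
  let ?Sig = "Sigma (Btw l m) (\<lambda>v. T1 v \<times> T2 v)"
  have "bij_betw (\<lambda>(v, R1, R2). comb v R1 R2) ?Sig SS"
  proof (rule bij_betw_byWitness[where f' = fwd])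
    show "\<forall>a\<in>?Sig. fwd ((\<lambda>(v, R1, R2). comb v R1 R2) a) = a"
    proof
      fix a assume "a \<in> ?Sig"
      then obtain v R1 R2 where "a = (v, R1, R2)" "v \<in> Btw l m" "R1 \<in> T1 v" "R2 \<in> T2 v" by blast
      then show "fwd ((\<lambda>(v, R1, R2). comb v R1 R2) a) = a" using comb_props by simp
    qed
    show "(\<lambda>(v, R1, R2). comb v R1 R2) ` ?Sig \<subseteq> SS"
    proof
      fix b assume "b \<in> (\<lambda>(v, R1, R2). comb v R1 R2) ` ?Sig"
      then obtain v R1 R2 where "(v, R1, R2) \<in> ?Sig" "b = comb v R1 R2" by auto
      then have "b = comb v R1 R2" "v \<in> Btw l m" "R1 \<in> T1 v" "R2 \<in> T2 v" by auto
      then show "b \<in> SS" using comb_props by simp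
    qed
    show "\<forall>a'\<in>SS. (\<lambda>(v, R1, R2). comb v R1 R2) (fwd a') = a'"
    proof
      fix R assume "R \<in> SS"
      then show "(\<lambda>(v, R1, R2). comb v R1 R2) (fwd R) = R" using fwd_props[of R] unfolding fwd_def by simp
    qed
    show "fwd ` SS \<subseteq> ?Sig"
    proof
      fix b assume "b \<in> fwd ` SS"
      then obtain R where "R \<in> SS" "b = fwd R" by blast
      then show "b \<in> ?Sig" using fwd_props[of R] unfolding fwd_def by simp
    qed
  qed
  then have "card SS = card ?Sig" by (simp add: bij_betw_same_card)
  also have "\<dots> = (\<Sum>v\<in>Btw l m. card (T1 v \<times> T2 v))"
  proof (rule card_SigmaI)
    show "finite (Btw l m)" by (rule finite_Btw)
    show "\<forall>v\<in>Btw l m. finite (T1 v \<times> T2 v)"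
      unfolding T1_def T2_def Btw_def using finite_tabs cl cm by auto
  qed
  also have "\<dots> = (\<Sum>v\<in>Btw l m. card (T1 v) * card (T2 v))" by (simp add: card_cartesian_product)
  finally show ?thesis .
qed

end
end

datatype step = Dst nat | Ust nat

context cylk begin

definition Dn :: "(int \<Rightarrow> int) \<Rightarrow> nat \<Rightarrow> (int \<Rightarrow> int) set" where
  "Dn a c = {v. cylpar k n v \<and> strip a v c}"
definition Up :: "(int \<Rightarrow> int) \<Rightarrow> nat \<Rightarrow> (int \<Rightarrow> int) set" where
  "Up a c = {v. cylpar k n v \<and> strip v a c}"

fun succ :: "step \<Rightarrow> (int \<Rightarrow> int) \<Rightarrow> (int \<Rightarrow> int) set" where
  "succ (Dst c) a = Dn a c"
| "succ (Ust c) a = Up a c"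

primrec Pw :: "(int \<Rightarrow> int) \<Rightarrow> step list \<Rightarrow> nat" where
  "Pw a [] = 1"
| "Pw a (s # w) = (\<Sum>b\<in>succ s a. Pw b w)"

lemma finite_Dn: "finite (Dn a c)"
  by (rule finite_subset[OF _ finite_cyl_bounded[of "\<lambda>x. a (x + 1)" a]]) (auto simp: Dn_def strip_def)

lemma finite_Up: "finite (Up a c)"
proof (rule finite_subset[OF _ finite_cyl_bounded[of a "\<lambda>x. a (x - 1)"]])
  show "Up a c \<subseteq> {v. cylpar k n v \<and> (\<forall>x\<in>{0..<int k}. a x \<le> v x \<and> v x \<le> a (x - 1))}"
  proof
    fix v assume "v \<in> Up a c"
    then have cv: "cylpar k n v" and h: "\<And>x. v (x + 1) \<le> a x \<and> a x \<le> v x" unfolding Up_def strip_def by auto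
    have "v x \<le> a (x - 1)" for x using h[of "x - 1"] by simp
    then show "v \<in> {v. cylpar k n v \<and> (\<forall>x\<in>{0..<int k}. a x \<le> v x \<and> v x \<le> a (x - 1))}"
      using cv h by auto
  qed
qed

lemma finite_succ: "finite (succ s a)" by (cases s) (auto simp: finite_Dn finite_Up)

lemma succ_cyl: "b \<in> succ s a \<Longrightarrow> cylpar k n b" by (cases s) (auto simp: Dn_def Up_def)

lemma per_diff: "cylpar k n f \<Longrightarrow> cylpar k n g \<Longrightarrow> (f (x + int k) - g (x + int k)) = f x - g x"
  using cyl_step[of f x] cyl_step[of g x] by simp

lemma cylm1: "cylpar k n f \<Longrightarrow> f (x - 1 + int k) = f (x - 1) - dd" using cyl_step by blast
lemma cylp1: "cylpar k n f \<Longrightarrow> f (x + 1 + int k) = f (x + 1) - dd" using cyl_step by blast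

lemma card_Dn_Up:
  assumes ca: "cylpar k n a"
  shows "card (Dn a c) = card (Up a c)"
proof -
  define f where "f v = (\<lambda>y. a y + a (y - 1) - v (y - 1))" for v :: "int \<Rightarrow> int"
  define g where "g l = (\<lambda>x. a (x + 1) + a x - l (x + 1))" for l :: "int \<Rightarrow> int"
  have "bij_betw f (Dn a c) (Up a c)"
  proof (rule bij_betw_byWitness[where f' = g])
    show "\<forall>v\<in>Dn a c. g (f v) = v" unfolding f_def g_def by auto
    show "\<forall>l\<in>Up a c. f (g l) = l" unfolding f_def g_def by auto
    show "f ` Dn a c \<subseteq> Up a c"
    proof
      fix l assume "l \<in> f ` Dn a c"
      then obtain v where v: "v \<in> Dn a c" "l = f v" by blast
      then have cv: "cylpar k n v" and iv: "\<And>x. a (x + 1) \<le> v x \<and> v x \<le> a x" and sv: "sz a v = int c"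
        unfolding Dn_def strip_def by auto
      have lx: "l x = a x + a (x - 1) - v (x - 1)" for x using v(2) f_def by simp
      have b1: "l (x + 1) \<le> a x" for x using iv[of x] lx[of "x+1"] by simp
      have b2: "a x \<le> l x" for x using iv[of "x - 1"] lx[of x] by simp
      have "cylpar k n l"
      proof (rule cylparI)
        fix x show "l (x + 1) \<le> l x" using b1[of x] b2[of x] by simp
        show "l (x + int k) = l x - dd"
          using lx[of "x + int k"] lx[of x] cyl_step[OF ca, of x] cylm1[OF ca, of x] cylm1[OF cv, of x]
          by (simp add: algebra_simps)
      qed
      moreover have "sz l a = int c"
      proof -
        have "sz l a = (\<Sum>x\<in>{0..<int k}. a (x - 1) - v (x - 1))" unfolding sz_def by (rule sum.cong) (auto simp: lx)
        also have "\<dots> = (\<Sum>x\<in>{0..<int k}. a x - v x)"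
          by (rule sum_shift_m1[of "\<lambda>x. a x - v x"]) (rule per_diff[OF ca cv])
        finally show ?thesis using sv unfolding sz_def by simp
      qed
      ultimately show "l \<in> Up a c" unfolding Up_def strip_def using b1 b2 by auto
    qed
    show "g ` Up a c \<subseteq> Dn a c"
    proof
      fix v assume "v \<in> g ` Up a c"
      then obtain l where l: "l \<in> Up a c" "v = g l" by blast
      then have cl: "cylpar k n l" and il: "\<And>x. l (x + 1) \<le> a x \<and> a x \<le> l x" and sl: "sz l a = int c"
        unfolding Up_def strip_def by auto
      have vx: "v x = a (x + 1) + a x - l (x + 1)" for x using l(2) g_def by simp
      have b1: "a (x + 1) \<le> v x" for x using il[of x] vx[of x] by simp
      have b2: "v x \<le> a x" for x using il[of "x + 1"] vx[of x] by simp
      have "cylpar k n v"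
      proof (rule cylparI)
        fix x show "v (x + 1) \<le> v x" using b1[of x] b2[of "x + 1"] by simp
        show "v (x + int k) = v x - dd"
          using vx[of "x + int k"] vx[of x] cyl_step[OF ca, of x] cylp1[OF ca, of x] cylp1[OF cl, of x]
          by (simp add: algebra_simps)
      qed
      moreover have "sz a v = int c"
      proof -
        have "sz a v = (\<Sum>x\<in>{0..<int k}. l (x + 1) - a (x + 1))" unfolding sz_def by (rule sum.cong) (auto simp: vx)
        also have "\<dots> = (\<Sum>x\<in>{0..<int k}. l x - a x)"
          by (rule sum_shift_p1[of "\<lambda>x. l x - a x"]) (rule per_diff[OF cl ca])
        finally show ?thesis using sl unfolding sz_def by simp
      qed
      ultimately show "v \<in> Dn a c" unfolding Dn_def strip_def using b1 b2 by auto
    qed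
  qed
  then show ?thesis by (rule bij_betw_same_card)
qed

end

context cylk begin

lemma per_max: "cylpar k n f \<Longrightarrow> cylpar k n g \<Longrightarrow> max (f (x + int k)) (g (x + int k)) = max (f x) (g x) - dd"
  using cyl_step[of f x] cyl_step[of g x] by (simp add: max_def)
lemma per_min: "cylpar k n f \<Longrightarrow> cylpar k n g \<Longrightarrow> min (f (x + int k)) (g (x + int k)) = min (f x) (g x) - dd"
  using cyl_step[of f x] cyl_step[of g x] by (simp add: min_def)

lemma commute_pairs:
  assumes ca: "cylpar k n a"
  shows "bij_betw (\<lambda>(s, v). (\<lambda>y. max (a y) (v y) + min (a (y - 1)) (v (y - 1)) - s (y - 1), v))
           (Sigma (Dn a p) (\<lambda>s. Up s q)) (Sigma (Up a q) (\<lambda>r. Dn r p))"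
proof (rule bij_betw_byWitness[where f' = "\<lambda>(r, v). (\<lambda>x. max (a (x + 1)) (v (x + 1)) + min (a x) (v x) - r (x + 1), v)"])
  let ?f = "\<lambda>(s, v). (\<lambda>y. max (a y) (v y) + min (a (y - 1)) (v (y - 1)) - s (y - 1), v)"
  let ?g = "\<lambda>(r, v). (\<lambda>x. max (a (x + 1)) (v (x + 1)) + min (a x) (v x) - r (x + 1), v)"
  show "\<forall>x\<in>Sigma (Dn a p) (\<lambda>s. Up s q). ?g (?f x) = x" by auto
  show "\<forall>x\<in>Sigma (Up a q) (\<lambda>r. Dn r p). ?f (?g x) = x" by auto
  show "?f ` Sigma (Dn a p) (\<lambda>s. Up s q) \<subseteq> Sigma (Up a q) (\<lambda>r. Dn r p)"
  proof
    fix z assume "z \<in> ?f ` Sigma (Dn a p) (\<lambda>s. Up s q)"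
    then obtain s v where sv: "s \<in> Dn a p" "v \<in> Up s q" "z = ?f (s, v)" by blast
    then have cs: "cylpar k n s" and isb: "\<And>x. a (x + 1) \<le> s x \<and> s x \<le> a x" and ss: "sz a s = int p"
      and cv: "cylpar k n v" and iv: "\<And>x. v (x + 1) \<le> s x \<and> s x \<le> v x" and sv': "sz v s = int q"
      unfolding Dn_def Up_def strip_def by auto
    define r where "r = (\<lambda>y. max (a y) (v y) + min (a (y - 1)) (v (y - 1)) - s (y - 1))"
    have z: "z = (r, v)" using sv(3) r_def by simp
    have rb: "a y \<le> r y \<and> v y \<le> r y \<and> r y \<le> a (y - 1) \<and> r y \<le> v (y - 1)" for y
      using isb[of "y - 1"] iv[of "y - 1"] unfolding r_def by (auto simp: max_def min_def)
    have cr: "cylpar k n r"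
    proof (rule cylparI)
      fix x show "r (x + 1) \<le> r x" using rb[of x] rb[of "x + 1"] by simp
      show "r (x + int k) = r x - dd"
        unfolding r_def using per_max[OF ca cv, of x] per_min[OF ca cv, of "x - 1"] cylm1[OF cs, of x]
        by (simp add: algebra_simps)
    qed
    have perm: "\<And>x. (min (a (x + int k)) (v (x + int k)) - s (x + int k)) = min (a x) (v x) - s x"
      using per_min[OF ca cv] cyl_step[OF cs] by simp
    have sum1: "(\<Sum>x\<in>{0..<int k}. r x - w x) = (\<Sum>x\<in>{0..<int k}. max (a x) (v x) - w x) + (\<Sum>x\<in>{0..<int k}. min (a x) (v x) - s x)" for w
    proof -
      have "(\<Sum>x\<in>{0..<int k}. r x - w x) = (\<Sum>x\<in>{0..<int k}. (max (a x) (v x) - w x) + (min (a (x - 1)) (v (x - 1)) - s (x - 1)))"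
        unfolding r_def by (rule sum.cong) auto
      also have "\<dots> = (\<Sum>x\<in>{0..<int k}. max (a x) (v x) - w x) + (\<Sum>x\<in>{0..<int k}. min (a (x - 1)) (v (x - 1)) - s (x - 1))"
        by (rule sum.distrib)
      also have "(\<Sum>x\<in>{0..<int k}. min (a (x - 1)) (v (x - 1)) - s (x - 1)) = (\<Sum>x\<in>{0..<int k}. min (a x) (v x) - s x)"
        by (rule sum_shift_m1[of "\<lambda>x. min (a x) (v x) - s x"]) (rule perm)
      finally show ?thesis .
    qed
    have "sz r a = int q"
    proof -
      have "sz r a = (\<Sum>x\<in>{0..<int k}. (max (a x) (v x) - a x) + (min (a x) (v x) - s x))"
        unfolding sz_def sum1 by (rule sum.distrib[symmetric])
      also have "\<dots> = sz v s" unfolding sz_def by (rule sum.cong) (auto simp: max_def min_def)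
      finally show ?thesis using sv' by simp
    qed
    moreover have "sz r v = int p"
    proof -
      have "sz r v = (\<Sum>x\<in>{0..<int k}. (max (a x) (v x) - v x) + (min (a x) (v x) - s x))"
        unfolding sz_def sum1 by (rule sum.distrib[symmetric])
      also have "\<dots> = sz a s" unfolding sz_def by (rule sum.cong) (auto simp: max_def min_def)
      finally show ?thesis using ss by simp
    qed
    moreover have "r (x + 1) \<le> a x \<and> a x \<le> r x" for x using rb[of x] rb[of "x+1"] by simp
    moreover have "r (x + 1) \<le> v x \<and> v x \<le> r x" for x using rb[of x] rb[of "x+1"] by simp
    ultimately show "z \<in> Sigma (Up a q) (\<lambda>r. Dn r p)" unfolding z Up_def Dn_def strip_def using cr cv by auto
  qed
  show "?g ` Sigma (Up a q) (\<lambda>r. Dn r p) \<subseteq> Sigma (Dn a p) (\<lambda>s. Up s q)"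
  proof
    fix z assume "z \<in> ?g ` Sigma (Up a q) (\<lambda>r. Dn r p)"
    then obtain r v where rv: "r \<in> Up a q" "v \<in> Dn r p" "z = ?g (r, v)" by blast
    then have cr: "cylpar k n r" and ir: "\<And>x. r (x + 1) \<le> a x \<and> a x \<le> r x" and sr: "sz r a = int q"
      and cv: "cylpar k n v" and iv: "\<And>x. r (x + 1) \<le> v x \<and> v x \<le> r x" and sv': "sz r v = int p"
      unfolding Dn_def Up_def strip_def by auto
    define s where "s = (\<lambda>x. max (a (x + 1)) (v (x + 1)) + min (a x) (v x) - r (x + 1))"
    have z: "z = (s, v)" using rv(3) s_def by simp
    have sb: "a (x + 1) \<le> s x \<and> v (x + 1) \<le> s x \<and> s x \<le> a x \<and> s x \<le> v x" for x
      using ir[of x] iv[of x] ir[of "x + 1"] iv[of "x + 1"] unfolding s_def by (auto simp: max_def min_def)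
    have cs: "cylpar k n s"
    proof (rule cylparI)
      fix x show "s (x + 1) \<le> s x" using sb[of x] sb[of "x + 1"] by simp
      show "s (x + int k) = s x - dd"
        unfolding s_def using per_max[OF ca cv, of "x + 1"] per_min[OF ca cv, of x] cylp1[OF cr, of x]
        by (simp add: algebra_simps)
    qed
    have perm: "\<And>x. (r (x + int k) - max (a (x + int k)) (v (x + int k))) = r x - max (a x) (v x)"
      using per_max[OF ca cv] cyl_step[OF cr] by simp
    have sum1: "(\<Sum>x\<in>{0..<int k}. w x - s x) = (\<Sum>x\<in>{0..<int k}. w x - min (a x) (v x)) + (\<Sum>x\<in>{0..<int k}. r x - max (a x) (v x))" for w
    proof -
      have "(\<Sum>x\<in>{0..<int k}. w x - s x) = (\<Sum>x\<in>{0..<int k}. (w x - min (a x) (v x)) + (r (x + 1) - max (a (x + 1)) (v (x + 1))))"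
        unfolding s_def by (rule sum.cong) auto
      also have "\<dots> = (\<Sum>x\<in>{0..<int k}. w x - min (a x) (v x)) + (\<Sum>x\<in>{0..<int k}. r (x + 1) - max (a (x + 1)) (v (x + 1)))"
        by (rule sum.distrib)
      also have "(\<Sum>x\<in>{0..<int k}. r (x + 1) - max (a (x + 1)) (v (x + 1))) = (\<Sum>x\<in>{0..<int k}. r x - max (a x) (v x))"
        by (rule sum_shift_p1[of "\<lambda>x. r x - max (a x) (v x)"]) (rule perm)
      finally show ?thesis .
    qed
    have "sz a s = int p"
    proof -
      have "sz a s = (\<Sum>x\<in>{0..<int k}. (a x - min (a x) (v x)) + (r x - max (a x) (v x)))"
        unfolding sz_def sum1 by (rule sum.distrib[symmetric])
      also have "\<dots> = sz r v" unfolding sz_def by (rule sum.cong) (auto simp: max_def min_def)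
      finally show ?thesis using sv' by simp
    qed
    moreover have "sz v s = int q"
    proof -
      have "sz v s = (\<Sum>x\<in>{0..<int k}. (v x - min (a x) (v x)) + (r x - max (a x) (v x)))"
        unfolding sz_def sum1 by (rule sum.distrib[symmetric])
      also have "\<dots> = sz r a" unfolding sz_def by (rule sum.cong) (auto simp: max_def min_def)
      finally show ?thesis using sr by simp
    qed
    moreover have "a (x + 1) \<le> s x \<and> s x \<le> a x" for x using sb[of x] by simp
    moreover have "v (x + 1) \<le> s x \<and> s x \<le> v x" for x using sb[of x] by simp
    ultimately show "z \<in> Sigma (Dn a p) (\<lambda>s. Up s q)" unfolding z Up_def Dn_def strip_def using cs cv by auto
  qed
qed

end

context cylk begin

lemma Pw_commute:
  assumes ca: "cylpar k n a"
  shows "Pw a (Dst p # Ust q # w) = Pw a (Ust q # Dst p # w)"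
proof -
  let ?h = "\<lambda>(s, v). (\<lambda>y. max (a y) (v y) + min (a (y - 1)) (v (y - 1)) - s (y - 1), v)"
  have "Pw a (Dst p # Ust q # w) = (\<Sum>s\<in>Dn a p. \<Sum>v\<in>Up s q. Pw v w)" by simp
  also have "\<dots> = (\<Sum>(s, v)\<in>Sigma (Dn a p) (\<lambda>s. Up s q). Pw v w)"
    by (rule sum.Sigma) (auto simp: finite_Dn finite_Up)
  also have "\<dots> = (\<Sum>z\<in>Sigma (Dn a p) (\<lambda>s. Up s q). (\<lambda>(r, v). Pw v w) (?h z))"
    by (rule sum.cong) auto
  also have "\<dots> = (\<Sum>(r, v)\<in>Sigma (Up a q) (\<lambda>r. Dn r p). Pw v w)"
    by (rule sum.reindex_bij_betw[OF commute_pairs[OF ca]])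
  also have "\<dots> = (\<Sum>r\<in>Up a q. \<Sum>v\<in>Dn r p. Pw v w)"
    by (rule sum.Sigma[symmetric]) (auto simp: finite_Dn finite_Up)
  also have "\<dots> = Pw a (Ust q # Dst p # w)" by simp
  finally show ?thesis .
qed

lemma Pw_move: "cylpar k n a \<Longrightarrow> Pw a (map Dst xs @ Ust q # w) = Pw a (Ust q # map Dst xs @ w)"
proof (induction xs arbitrary: a)
  case Nil then show ?case by simp
next
  case (Cons p xs)
  have "Pw a (map Dst (p # xs) @ Ust q # w) = (\<Sum>s\<in>Dn a p. Pw s (map Dst xs @ Ust q # w))" by simp
  also have "\<dots> = (\<Sum>s\<in>Dn a p. Pw s (Ust q # map Dst xs @ w))"
    by (rule sum.cong[OF refl], rule Cons.IH) (simp add: Dn_def)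
  also have "\<dots> = Pw a (Dst p # Ust q # (map Dst xs @ w))" by simp
  also have "\<dots> = Pw a (Ust q # Dst p # (map Dst xs @ w))" by (rule Pw_commute[OF Cons.prems])
  finally show ?case by simp
qed

lemma Pw_last: "cylpar k n a \<Longrightarrow> Pw a (w @ [Dst c]) = Pw a (w @ [Ust c])"
proof (induction w arbitrary: a)
  case Nil then show ?case using card_Dn_Up by simp
next
  case (Cons s w)
  show ?case by simp (rule sum.cong, auto intro!: Cons.IH dest: succ_cyl)
qed

lemma Pw_main: "cylpar k n a \<Longrightarrow> Pw a (map Dst cs) = Pw a (map Ust (rev cs))"
proof (induction cs arbitrary: a rule: rev_induct)
  case Nil then show ?case by simp
next
  case (snoc c cs)
  have "Pw a (map Dst (cs @ [c])) = Pw a (map Dst cs @ [Dst c])" by simp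
  also have "\<dots> = Pw a (map Dst cs @ [Ust c])" by (rule Pw_last[OF snoc.prems])
  also have "\<dots> = Pw a (Ust c # map Dst cs @ [])" using Pw_move[OF snoc.prems, of cs c "[]"] by simp
  also have "\<dots> = (\<Sum>b\<in>Up a c. Pw b (map Dst cs))" by simp
  also have "\<dots> = (\<Sum>b\<in>Up a c. Pw b (map Ust (rev cs)))"
    by (rule sum.cong) (auto intro!: snoc.IH simp: Up_def)
  also have "\<dots> = Pw a (map Ust (rev (cs @ [c])))" by simp
  finally show ?case .
qed

end

context cylk begin

lemma ss_split:
  assumes cl: "cylpar k n l" and cm: "cylpar k n m" and ml: "subpart m l"
    and down: "\<And>u v. v \<le> u \<Longrightarrow> P u \<Longrightarrow> P v"
  shows "skew_schur k n l m (M :: 'a::linorder multiset) = (\<Sum>v\<in>Btw l m. skew_schur k n v m (filter_mset P M) * skew_schur k n l v (filter_mset (\<lambda>x. \<not> P x) M))"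
proof -
  have dw: "\<forall>u v. v \<le> u \<longrightarrow> P u \<longrightarrow> P v" using down by blast
  have sc: "card (SS l m M) = (\<Sum>v\<in>Btw l m. card (T1 m P M v) * card (T2 l P M v))"
    by (rule split_card[where l = l and m = m and P = P and M = M, OF cl cm ml]) (use dw in blast)
  have d1: "SS l m M = {R. ssct k n l m R \<and> tab_content k n l m R = M}"
    by (rule SS_def[where l = l and m = m and P = P and M = M, OF cl cm ml]) (use dw in blast)
  have d2: "\<And>v. T1 m P M v = {R. ssct k n v m R \<and> tab_content k n v m R = filter_mset P M}"
    by (rule T1_def[where l = l and m = m and P = P and M = M, OF cl cm ml]) (use dw in blast)
  have d3: "\<And>v. T2 l P M v = {R. ssct k n l v R \<and> tab_content k n l v R = filter_mset (\<lambda>x. \<not> P x) M}"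
    by (rule T2_def[where l = l and m = m and P = P and M = M, OF cl cm ml]) (use dw in blast)
  show ?thesis using sc unfolding d1 d2 d3 skew_schur_def .
qed

lemma subpart_trans: "subpart a b \<Longrightarrow> subpart b c \<Longrightarrow> subpart a c"
  unfolding subpart_def by (meson order_trans)

lemma strip_sub: "strip a v c \<Longrightarrow> subpart v a" unfolding strip_def subpart_def by blast

lemma strip0: assumes "cylpar k n a" "cylpar k n m" "subpart m a" shows "strip a m 0 \<longleftrightarrow> m = a"
proof
  assume s: "strip a m 0"
  then have "(\<Sum>x\<in>{0..<int k}. a x - m x) = 0" unfolding strip_def sz_def by simp
  moreover have "\<forall>x\<in>{0..<int k}. 0 \<le> a x - m x" using assms(3) unfolding subpart_def by auto
  ultimately have h: "\<forall>x\<in>{0..<int k}. a x - m x = 0"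
    using sum_nonneg_eq_0_iff[of "{0..<int k}" "\<lambda>x. a x - m x"] by simp
  show "m = a"
  proof (rule cyl_eqI[OF assms(2,1)])
    fix x :: int assume "0 \<le> x" "x < int k" then show "m x = a x" using h by simp
  qed
next
  assume "m = a" then show "strip a m 0" using cyl_mono1[OF assms(1)] unfolding strip_def sz_def by simp
qed

lemma ss_empty: assumes "cylpar k n a" "cylpar k n m" "subpart m a"
  shows "skew_schur k n a m ({#} :: 'a::linorder multiset) = (if m = a then 1 else 0)"
  using ss_single[OF assms, of 0 "undefined :: 'a"] strip0[OF assms] by simp

lemma ss_rec_max:
  assumes ca: "cylpar k n a" and cm: "cylpar k n m" and ma: "subpart m a"
    and M: "M \<noteq> {#}" and x: "x = Max (set_mset (M :: 'a::linorder multiset))"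
  shows "skew_schur k n a m M = (\<Sum>v\<in>{v\<in>Dn a (count M x). subpart m v}. skew_schur k n v m (filter_mset (\<lambda>y. y < x) M))"
proof -
  let ?c = "count M x" and ?M' = "filter_mset (\<lambda>y. y < x) M"
  have le: "\<And>y. y \<in># M \<Longrightarrow> y \<le> x" using x by simp
  have rep: "filter_mset (\<lambda>y. \<not> y < x) M = replicate_mset ?c x"
  proof -
    have "filter_mset (\<lambda>y. \<not> y < x) M = filter_mset (\<lambda>y. y = x) M"
      by (rule filter_mset_cong) (use le in \<open>auto simp: not_less antisym\<close>)
    then show ?thesis by (simp add: filter_eq_replicate_mset)
  qed
  have "skew_schur k n a m M = (\<Sum>v\<in>Btw a m. skew_schur k n v m ?M' * skew_schur k n a v (filter_mset (\<lambda>y. \<not> y < x) M))"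
    by (rule ss_split[OF ca cm ma]) auto
  also have "\<dots> = (\<Sum>v\<in>Btw a m. if strip a v ?c then skew_schur k n v m ?M' else 0)"
  proof (rule sum.cong[OF refl])
    fix v assume "v \<in> Btw a m"
    then have "cylpar k n v" "subpart v a" unfolding Btw_def by auto
    then show "skew_schur k n v m ?M' * skew_schur k n a v (filter_mset (\<lambda>y. \<not> y < x) M) = (if strip a v ?c then skew_schur k n v m ?M' else 0)"
      unfolding rep using ss_single[OF ca, of v ?c x] by simp
  qed
  also have "\<dots> = (\<Sum>v\<in>{v\<in>Btw a m. strip a v ?c}. skew_schur k n v m ?M')"
    by (rule sum.inter_filter[symmetric]) (rule finite_Btw)
  also have "{v\<in>Btw a m. strip a v ?c} = {v\<in>Dn a ?c. subpart m v}"
    unfolding Btw_def Dn_def using strip_sub by auto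
  finally show ?thesis .
qed

lemma ss_rec_min:
  assumes cl: "cylpar k n l" and ca: "cylpar k n a" and al: "subpart a l"
    and M: "M \<noteq> {#}" and x: "x = Min (set_mset (M :: 'a::linorder multiset))"
  shows "skew_schur k n l a M = (\<Sum>v\<in>{v\<in>Up a (count M x). subpart v l}. skew_schur k n l v (filter_mset (\<lambda>y. \<not> y \<le> x) M))"
proof -
  let ?c = "count M x" and ?M' = "filter_mset (\<lambda>y. \<not> y \<le> x) M"
  have le: "\<And>y. y \<in># M \<Longrightarrow> x \<le> y" using x by simp
  have rep: "filter_mset (\<lambda>y. y \<le> x) M = replicate_mset ?c x"
  proof -
    have "filter_mset (\<lambda>y. y \<le> x) M = filter_mset (\<lambda>y. y = x) M"
      by (rule filter_mset_cong) (use le in \<open>auto simp: antisym\<close>)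
    then show ?thesis by (simp add: filter_eq_replicate_mset)
  qed
  have "skew_schur k n l a M = (\<Sum>v\<in>Btw l a. skew_schur k n v a (filter_mset (\<lambda>y. y \<le> x) M) * skew_schur k n l v ?M')"
    by (rule ss_split[OF cl ca al]) auto
  also have "\<dots> = (\<Sum>v\<in>Btw l a. if strip v a ?c then skew_schur k n l v ?M' else 0)"
  proof (rule sum.cong[OF refl])
    fix v assume "v \<in> Btw l a"
    then have "cylpar k n v" "subpart a v" unfolding Btw_def by auto
    then show "skew_schur k n v a (filter_mset (\<lambda>y. y \<le> x) M) * skew_schur k n l v ?M' = (if strip v a ?c then skew_schur k n l v ?M' else 0)"
      unfolding rep using ss_single[OF _ ca, of v ?c x] by simp
  qed
  also have "\<dots> = (\<Sum>v\<in>{v\<in>Btw l a. strip v a ?c}. skew_schur k n l v ?M')"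
    by (rule sum.inter_filter[symmetric]) (rule finite_Btw)
  also have "{v\<in>Btw l a. strip v a ?c} = {v\<in>Up a ?c. subpart v l}"
    unfolding Btw_def Up_def using strip_sub by auto
  finally show ?thesis .
qed

end

definition cli :: "'a::linorder multiset \<Rightarrow> nat list" where
  "cli M = map (count M) (sorted_list_of_set (set_mset M))"

lemma cli_empty: "cli {#} = []" unfolding cli_def by simp

lemma sorted_list_max:
  assumes "finite S" "S \<noteq> {}"
  shows "sorted_list_of_set S = sorted_list_of_set (S - {Max S}) @ [Max S]"
proof (rule sorted_distinct_set_unique)
  show "sorted (sorted_list_of_set (S - {Max S}) @ [Max S])"
    using assms by (auto simp: sorted_append)
  show "distinct (sorted_list_of_set (S - {Max S}) @ [Max S])" using assms by simp
  show "set (sorted_list_of_set S) = set (sorted_list_of_set (S - {Max S}) @ [Max S])"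
    using assms Max_in by auto
qed auto

lemma cli_max:
  assumes M: "M \<noteq> {#}" and x: "x = Max (set_mset M)"
  shows "cli M = cli (filter_mset (\<lambda>y. y < x) M) @ [count M x]"
proof -
  let ?M' = "filter_mset (\<lambda>y. y < x) M"
  have le: "\<And>y. y \<in># M \<Longrightarrow> y \<le> x" using x by simp
  have s: "set_mset ?M' = set_mset M - {x}" using le by (auto simp: less_le)
  have "sorted_list_of_set (set_mset M) = sorted_list_of_set (set_mset M - {x}) @ [x]"
    using sorted_list_max[of "set_mset M"] M x by simp
  moreover have "map (count M) (sorted_list_of_set (set_mset M - {x})) = map (count ?M') (sorted_list_of_set (set_mset M - {x}))"
    by (rule map_cong) (auto simp: less_le le)
  ultimately show ?thesis unfolding cli_def s by simp
qed

lemma cli_min: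
  assumes M: "M \<noteq> {#}" and x: "x = Min (set_mset M)"
  shows "cli M = count M x # cli (filter_mset (\<lambda>y. \<not> y \<le> x) M)"
proof -
  let ?M' = "filter_mset (\<lambda>y. \<not> y \<le> x) M"
  have le: "\<And>y. y \<in># M \<Longrightarrow> x \<le> y" using x by simp
  have s: "set_mset ?M' = set_mset M - {x}" using le by (auto simp: not_le less_le)
  have "sorted_list_of_set (set_mset M) = x # sorted_list_of_set (set_mset M - {x})"
    using sorted_list_of_set_nonempty[of "set_mset M"] M x by simp
  moreover have "map (count M) (sorted_list_of_set (set_mset M - {x})) = map (count ?M') (sorted_list_of_set (set_mset M - {x}))"
    by (rule map_cong) (auto simp: not_le le antisym)
  ultimately show ?thesis unfolding cli_def s by simp
qed

lemma size_filter_less: "x \<in># M \<Longrightarrow> \<not> P x \<Longrightarrow> size (filter_mset P M) < size M"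
proof -
  assume "x \<in># M" "\<not> P x"
  then have "x \<in># filter_mset (\<lambda>y. \<not> P y) M" by simp
  then have "size (filter_mset (\<lambda>y. \<not> P y) M) > 0" by (simp add: nonempty_has_size[symmetric] size_eq_0_iff_empty) (metis empty_iff set_mset_empty size_eq_0_iff_empty gr0I)
  moreover have "size M = size (filter_mset P M) + size (filter_mset (\<lambda>y. \<not> P y) M)"
    by (metis multiset_partition size_union)
  ultimately show ?thesis by linarith
qed


context cylk begin

definition Zd :: "(int \<Rightarrow> int) \<Rightarrow> 'a::linorder multiset \<Rightarrow> (int \<Rightarrow> int) set" where
  "Zd a M = {mu \<in> {mu. cylpar k n mu \<and> subpart mu a}. skew_schur k n a mu M \<noteq> 0}"
definition Zu :: "(int \<Rightarrow> int) \<Rightarrow> 'a::linorder multiset \<Rightarrow> (int \<Rightarrow> int) set" where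
  "Zu a M = {lam \<in> {lam. cylpar k n lam \<and> subpart a lam}. skew_schur k n lam a M \<noteq> 0}"

lemma subpart_refl: "subpart a a" unfolding subpart_def by simp

lemma G_main: "cylpar k n a \<Longrightarrow> finite (Zd a M) \<and>
   fsum {mu. cylpar k n mu \<and> subpart mu a} (\<lambda>mu. skew_schur k n a mu) M = Pw a (map Dst (rev (cli M)))"
proof (induction "size M" arbitrary: M a rule: less_induct)
  case less
  note ca = less.prems
  have fs: "fsum {mu. cylpar k n mu \<and> subpart mu a} (\<lambda>mu. skew_schur k n a mu) M = (\<Sum>mu\<in>Zd a M. skew_schur k n a mu M)"
    unfolding fsum_def Zd_def by simp
  show ?case
  proof (cases "M = {#}")
    case True
    have e: "skew_schur k n a a M = 1" using ss_empty[OF ca ca subpart_refl] True by simp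
    have "Zd a M = {a}"
    proof (rule set_eqI)
      fix mu show "mu \<in> Zd a M \<longleftrightarrow> mu \<in> {a}"
      proof (cases "cylpar k n mu \<and> subpart mu a")
        case T: True
        then have "skew_schur k n a mu M = (if mu = a then 1 else 0)" using ss_empty[OF ca, of mu] True by simp
        then show ?thesis unfolding Zd_def using T by auto
      next
        case F: False then show ?thesis unfolding Zd_def using ca subpart_refl by auto
      qed
    qed
    then show ?thesis unfolding fs using True ss_empty[OF ca ca subpart_refl] by (simp add: cli_empty)
  next
    case False
    define x where "x = Max (set_mset M)"
    define c where "c = count M x"
    define M' where "M' = filter_mset (\<lambda>y. y < x) M"
    have xin: "x \<in># M" unfolding x_def using False by simp
    have sz: "size M' < size M" unfolding M'_def by (rule size_filter_less[OF xin]) simp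
    have IH: "\<And>v. cylpar k n v \<Longrightarrow> finite (Zd v M') \<and> fsum {mu. cylpar k n mu \<and> subpart mu v} (\<lambda>mu. skew_schur k n v mu) M' = Pw v (map Dst (rev (cli M')))"
      using less.hyps[OF sz] by blast
    have rec: "skew_schur k n a mu M = (\<Sum>v\<in>{v\<in>Dn a c. subpart mu v}. skew_schur k n v mu M')"
      if "cylpar k n mu" "subpart mu a" for mu
      unfolding c_def M'_def by (rule ss_rec_max[OF ca that False x_def])
    define W where "W = (\<Union>v\<in>Dn a c. Zd v M')"
    have cDn: "\<And>v. v \<in> Dn a c \<Longrightarrow> cylpar k n v \<and> subpart v a" unfolding Dn_def using strip_sub by auto
    have finW: "finite W" unfolding W_def using finite_Dn IH cDn by blast
    have Wsub: "\<And>mu. mu \<in> W \<Longrightarrow> cylpar k n mu \<and> subpart mu a"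
      unfolding W_def Zd_def using cDn subpart_trans by blast
    have ZW: "Zd a M \<subseteq> W"
    proof
      fix mu assume mu: "mu \<in> Zd a M"
      then have cm: "cylpar k n mu" "subpart mu a" "skew_schur k n a mu M \<noteq> 0" unfolding Zd_def by auto
      then have "(\<Sum>v\<in>{v\<in>Dn a c. subpart mu v}. skew_schur k n v mu M') \<noteq> 0" using rec by simp
      then obtain v where "v \<in> Dn a c" "subpart mu v" "skew_schur k n v mu M' \<noteq> 0"
        by (metis (no_types, lifting) mem_Collect_eq sum.neutral)
      then show "mu \<in> W" unfolding W_def Zd_def using cm by blast
    qed
    have "(\<Sum>mu\<in>Zd a M. skew_schur k n a mu M) = (\<Sum>mu\<in>W. skew_schur k n a mu M)"
      by (rule sum.mono_neutral_left[OF finW ZW]) (use Wsub in \<open>auto simp: Zd_def\<close>)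
    also have "\<dots> = (\<Sum>mu\<in>W. \<Sum>v\<in>{v\<in>Dn a c. subpart mu v}. skew_schur k n v mu M')"
      by (rule sum.cong[OF refl]) (use Wsub rec in blast)
    also have "\<dots> = (\<Sum>v\<in>Dn a c. \<Sum>mu\<in>{mu\<in>W. subpart mu v}. skew_schur k n v mu M')"
      by (rule sum.swap_restrict[OF finW finite_Dn])
    also have "\<dots> = (\<Sum>v\<in>Dn a c. Pw v (map Dst (rev (cli M'))))"
    proof (rule sum.cong[OF refl])
      fix v assume v: "v \<in> Dn a c"
      have "Zd v M' \<subseteq> {mu\<in>W. subpart mu v}" unfolding W_def Zd_def using v by blast
      then have "(\<Sum>mu\<in>{mu\<in>W. subpart mu v}. skew_schur k n v mu M') = (\<Sum>mu\<in>Zd v M'. skew_schur k n v mu M')"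
        by (intro sum.mono_neutral_right) (use finW Wsub in \<open>auto simp: Zd_def\<close>)
      also have "\<dots> = fsum {mu. cylpar k n mu \<and> subpart mu v} (\<lambda>mu. skew_schur k n v mu) M'"
        unfolding fsum_def Zd_def by simp
      also have "\<dots> = Pw v (map Dst (rev (cli M')))" using IH cDn v by blast
      finally show "(\<Sum>mu\<in>{mu\<in>W. subpart mu v}. skew_schur k n v mu M') = Pw v (map Dst (rev (cli M')))" .
    qed
    also have "\<dots> = Pw a (map Dst (rev (cli M)))"
      unfolding cli_max[OF False x_def] M'_def[symmetric] c_def[symmetric] by simp
    finally show ?thesis unfolding fs using ZW finW finite_subset by blast
  qed
qed

lemma H_main: "cylpar k n a \<Longrightarrow> finite (Zu a M) \<and>
   fsum {lam. cylpar k n lam \<and> subpart a lam} (\<lambda>lam. skew_schur k n lam a) M = Pw a (map Ust (cli M))"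
proof (induction "size M" arbitrary: M a rule: less_induct)
  case less
  note ca = less.prems
  have fs: "fsum {lam. cylpar k n lam \<and> subpart a lam} (\<lambda>lam. skew_schur k n lam a) M = (\<Sum>lam\<in>Zu a M. skew_schur k n lam a M)"
    unfolding fsum_def Zu_def by simp
  show ?case
  proof (cases "M = {#}")
    case True
    have e: "skew_schur k n a a M = 1" using ss_empty[OF ca ca subpart_refl] True by simp
    have "Zu a M = {a}"
    proof (rule set_eqI)
      fix lam show "lam \<in> Zu a M \<longleftrightarrow> lam \<in> {a}"
      proof (cases "cylpar k n lam \<and> subpart a lam")
        case T: True
        then have "skew_schur k n lam a M = (if a = lam then 1 else 0)" using ss_empty[OF _ ca, of lam] True by simp
        then show ?thesis unfolding Zu_def using T by auto
      next
        case F: False then show ?thesis unfolding Zu_def using ca subpart_refl by auto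
      qed
    qed
    then show ?thesis unfolding fs using True ss_empty[OF ca ca subpart_refl] by (simp add: cli_empty)
  next
    case False
    define x where "x = Min (set_mset M)"
    define c where "c = count M x"
    define M' where "M' = filter_mset (\<lambda>y. \<not> y \<le> x) M"
    have xin: "x \<in># M" unfolding x_def using False by simp
    have sz: "size M' < size M" unfolding M'_def by (rule size_filter_less[OF xin]) simp
    have IH: "\<And>v. cylpar k n v \<Longrightarrow> finite (Zu v M') \<and> fsum {lam. cylpar k n lam \<and> subpart v lam} (\<lambda>lam. skew_schur k n lam v) M' = Pw v (map Ust (cli M'))"
      using less.hyps[OF sz] by blast
    have rec: "skew_schur k n lam a M = (\<Sum>v\<in>{v\<in>Up a c. subpart v lam}. skew_schur k n lam v M')"
      if "cylpar k n lam" "subpart a lam" for lam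
      unfolding c_def M'_def by (rule ss_rec_min[OF that(1) ca that(2) False x_def])
    define W where "W = (\<Union>v\<in>Up a c. Zu v M')"
    have cUp: "\<And>v. v \<in> Up a c \<Longrightarrow> cylpar k n v \<and> subpart a v" unfolding Up_def using strip_sub by auto
    have finW: "finite W" unfolding W_def using finite_Up IH cUp by blast
    have Wsub: "\<And>lam. lam \<in> W \<Longrightarrow> cylpar k n lam \<and> subpart a lam"
      unfolding W_def Zu_def using cUp subpart_trans by blast
    have ZW: "Zu a M \<subseteq> W"
    proof
      fix lam assume lam: "lam \<in> Zu a M"
      then have cm: "cylpar k n lam" "subpart a lam" "skew_schur k n lam a M \<noteq> 0" unfolding Zu_def by auto
      then have "(\<Sum>v\<in>{v\<in>Up a c. subpart v lam}. skew_schur k n lam v M') \<noteq> 0" using rec by simp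
      then obtain v where "v \<in> Up a c" "subpart v lam" "skew_schur k n lam v M' \<noteq> 0"
        by (metis (no_types, lifting) mem_Collect_eq sum.neutral)
      then show "lam \<in> W" unfolding W_def Zu_def using cm by blast
    qed
    have "(\<Sum>lam\<in>Zu a M. skew_schur k n lam a M) = (\<Sum>lam\<in>W. skew_schur k n lam a M)"
      by (rule sum.mono_neutral_left[OF finW ZW]) (use Wsub in \<open>auto simp: Zu_def\<close>)
    also have "\<dots> = (\<Sum>lam\<in>W. \<Sum>v\<in>{v\<in>Up a c. subpart v lam}. skew_schur k n lam v M')"
      by (rule sum.cong[OF refl]) (use Wsub rec in blast)
    also have "\<dots> = (\<Sum>v\<in>Up a c. \<Sum>lam\<in>{lam\<in>W. subpart v lam}. skew_schur k n lam v M')"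
      by (rule sum.swap_restrict[OF finW finite_Up])
    also have "\<dots> = (\<Sum>v\<in>Up a c. Pw v (map Ust (cli M')))"
    proof (rule sum.cong[OF refl])
      fix v assume v: "v \<in> Up a c"
      have "Zu v M' \<subseteq> {lam\<in>W. subpart v lam}" unfolding W_def Zu_def using v by blast
      then have "(\<Sum>lam\<in>{lam\<in>W. subpart v lam}. skew_schur k n lam v M') = (\<Sum>lam\<in>Zu v M'. skew_schur k n lam v M')"
        by (intro sum.mono_neutral_right) (use finW Wsub in \<open>auto simp: Zu_def\<close>)
      also have "\<dots> = fsum {lam. cylpar k n lam \<and> subpart v lam} (\<lambda>lam. skew_schur k n lam v) M'"
        unfolding fsum_def Zu_def by simp
      also have "\<dots> = Pw v (map Ust (cli M'))" using IH cUp v by blast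
      finally show "(\<Sum>lam\<in>{lam\<in>W. subpart v lam}. skew_schur k n lam v M') = Pw v (map Ust (cli M'))" .
    qed
    also have "\<dots> = Pw a (map Ust (cli M))"
      unfolding cli_min[OF False x_def] M'_def[symmetric] c_def[symmetric] by simp
    finally show ?thesis unfolding fs using ZW finW finite_subset by blast
  qed
qed

end

theorem mainTheorem6:
  fixes k n :: nat and alpha :: "int \<Rightarrow> int"
  assumes "1 \<le> k" and "k < n" and "cylpar k n alpha"
  shows "fsummable {mu. cylpar k n mu \<and> subpart mu alpha}
           (\<lambda>mu. (skew_schur k n alpha mu :: ('a::linorder) fps_mv))
       \<and> fsummable {lam. cylpar k n lam \<and> subpart alpha lam}
           (\<lambda>lam. (skew_schur k n lam alpha :: 'a fps_mv))
       \<and> fsum {mu. cylpar k n mu \<and> subpart mu alpha}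
           (\<lambda>mu. (skew_schur k n alpha mu :: 'a fps_mv))
         = fsum {lam. cylpar k n lam \<and> subpart alpha lam}
           (\<lambda>lam. skew_schur k n lam alpha)"
proof -
  interpret cylk k n using assms(1,2) by unfold_locales
  note ca = assms(3)
  have G: "\<And>M :: 'a multiset. finite (Zd alpha M) \<and>
     fsum {mu. cylpar k n mu \<and> subpart mu alpha} (\<lambda>mu. skew_schur k n alpha mu) M = Pw alpha (map Dst (rev (cli M)))"
    by (rule G_main[OF ca])
  have H: "\<And>M :: 'a multiset. finite (Zu alpha M) \<and>
     fsum {lam. cylpar k n lam \<and> subpart alpha lam} (\<lambda>lam. skew_schur k n lam alpha) M = Pw alpha (map Ust (cli M))"
    by (rule H_main[OF ca])
  have s1: "fsummable {mu. cylpar k n mu \<and> subpart mu alpha} (\<lambda>mu. (skew_schur k n alpha mu :: 'a fps_mv))"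
    unfolding fsummable_def using G unfolding Zd_def by blast
  have s2: "fsummable {lam. cylpar k n lam \<and> subpart alpha lam} (\<lambda>lam. (skew_schur k n lam alpha :: 'a fps_mv))"
    unfolding fsummable_def using H unfolding Zu_def by blast
  have eq: "fsum {mu. cylpar k n mu \<and> subpart mu alpha} (\<lambda>mu. (skew_schur k n alpha mu :: 'a fps_mv))
         = fsum {lam. cylpar k n lam \<and> subpart alpha lam} (\<lambda>lam. skew_schur k n lam alpha)"
  proof
    fix M :: "'a multiset"
    have "fsum {mu. cylpar k n mu \<and> subpart mu alpha} (\<lambda>mu. skew_schur k n alpha mu) M = Pw alpha (map Dst (rev (cli M)))"
      using G by blast
    also have "\<dots> = Pw alpha (map Ust (rev (rev (cli M))))" by (rule Pw_main[OF ca])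
    also have "\<dots> = fsum {lam. cylpar k n lam \<and> subpart alpha lam} (\<lambda>lam. skew_schur k n lam alpha) M"
      using H by simp
    finally show "fsum {mu. cylpar k n mu \<and> subpart mu alpha} (\<lambda>mu. skew_schur k n alpha mu) M
       = fsum {lam. cylpar k n lam \<and> subpart alpha lam} (\<lambda>lam. skew_schur k n lam alpha) M" .
  qed
  show ?thesis using s1 s2 eq by blast
qed

end
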